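(* With $\Gamma^+(\overline{\mathcal O})=N^+(\overline{\mathcal O})/\mathbb Q^\times$, $\Gamma^1(\overline{\mathcal O})=\overline{\mathcal O}^1/\{\pm1\}$ and $\Gamma^1(\overline{\mathcal O})[2]=\{\gamma\in\overline{\mathcal O}^1:\gamma\equiv1\bmod 2\overline{\mathcal O}\}/\{\pm1\}$, we have (i) $\Gamma^+(\overline{\mathcal O})/\Gamma^1(\overline{\mathcal O})[2]\cong D_8\times C_2\times C_2$; (ii) $\Gamma^+(\overline{\mathcal O})/\Gamma^1(\overline{\mathcal O})\cong C_2\times C_2\times C_2$; (iii) $\Gamma^1(\overline{\mathcal O})/\Gamma^1(\overline{\mathcal O})[2]\cong C_2\times C_2$.
   Context: $B$ is the $\mathbb Q$-algebra with basis $1,e_1,e_2,e_3$ and multiplication $e_1^2=48,\ e_2^2=48,\ e_3^2=-240,\ e_1e_2=12-3e_3,\ e_2e_1=12+3e_3,\ e_2e_3=16e_1-4e_2,\ e_3e_2=-16e_1+4e_2,\ e_3e_1=-4e_1+16e_2,\ e_1e_3=4e_1-16e_2$ (an indefinite quaternion algebra over $\mathbb Q$ of discriminant 15). $\overline{\mathcal O}=\mathbb Z\oplus\mathbb Zw_1\oplus\mathbb Zw_2\oplus\mathbb Zw_3$, $w_1=(e_1-e_2)/6$, $w_2=e_2/2$, $w_3=\frac12(1+e_3/4)$, an Eichler order of reduced discriminant 30 and level 2. $\overline{\mathcal O}^1$ is the group of elements of reduced norm 1; $N^+(\overline{\mathcal O})$ is the set of $x\in B^\times$ of positive reduced norm with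 $x\overline{\mathcal O}x^{-1}=\overline{\mathcal O}$. $D_8$ is the dihedral group of order 8, $C_2$ the cyclic group of order 2. *)

theory Defs
  imports "HOL-Algebra.Algebra"
begin

section \<open>The quaternion algebra B of discriminant 15\<close>

text \<open>Elements of B are written a0 + a1 e1 + a2 e2 + a3 e3 with rational coordinates;
  we represent them by the coordinate function on the index set {0,1,2,3}
  (index 0 = the unit 1, index i = e_i).\<close>

datatype quat = Quat rat rat rat rat

fun qc :: "quat \<Rightarrow> nat \<Rightarrow> rat" where
  "qc (Quat a0 a1 a2 a3) i =
     (if i = 0 then a0 else if i = 1 then a1 else if i = 2 then a2 else if i = 3 then a3 else 0)"

definition qadd :: "quat \<Rightarrow> quat \<Rightarrow> quat" where
  "qadd x y = Quat (qc x 0 + qc y 0) (qc x 1 + qc y 1) (qc x 2 + qc y 2) (qc x 3 + qc y 3)"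

definition qscale :: "rat \<Rightarrow> quat \<Rightarrow> quat" where
  "qscale r x = Quat (r * qc x 0) (r * qc x 1) (r * qc x 2) (r * qc x 3)"

definition qsub :: "quat \<Rightarrow> quat \<Rightarrow> quat" where
  "qsub x y = qadd x (qscale (-1) y)"

definition qzero :: quat where "qzero = Quat 0 0 0 0"

definition qof :: "rat \<Rightarrow> quat" where "qof r = Quat r 0 0 0"
definition qone :: quat where "qone = qof 1"
definition e1 :: quat where "e1 = Quat 0 1 0 0"
definition e2 :: quat where "e2 = Quat 0 0 1 0"
definition e3 :: quat where "e3 = Quat 0 0 0 1"

fun ebasis_mul :: "nat \<Rightarrow> nat \<Rightarrow> quat" where
  "ebasis_mul i j =
    (if i = 0 then (if j = 0 then qone else if j = 1 then e1 else if j = 2 then e2 else e3)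
     else if j = 0 then (if i = 1 then e1 else if i = 2 then e2 else e3)
     else if i = 1 \<and> j = 1 then qof 48
     else if i = 2 \<and> j = 2 then qof 48
     else if i = 3 \<and> j = 3 then qof (-240)
     else if i = 1 \<and> j = 2 then Quat 12 0 0 (-3)
     else if i = 2 \<and> j = 1 then Quat 12 0 0 3
     else if i = 2 \<and> j = 3 then Quat 0 16 (-4) 0
     else if i = 3 \<and> j = 2 then Quat 0 (-16) 4 0
     else if i = 3 \<and> j = 1 then Quat 0 (-4) 16 0
     else Quat 0 4 (-16) 0)"

definition qsum :: "(nat \<Rightarrow> quat) \<Rightarrow> nat list \<Rightarrow> quat" where
  "qsum f xs = foldr (\<lambda>i acc. qadd (f i) acc) xs qzero"

definition qmul :: "quat \<Rightarrow> quat \<Rightarrow> quat" where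
  "qmul x y = qsum (\<lambda>i. qsum (\<lambda>j. qscale (qc x i * qc y j) (ebasis_mul i j)) [0,1,2,3]) [0,1,2,3]"

text \<open>Since e1^2, e2^2, e3^2 are rational and the
  e_i are not, each e_i has reduced trace 0, so trd(x) = 2 a0 and the canonical
  involution is conj(x) = trd(x) - x = a0 - a1 e1 - a2 e2 - a3 e3;
  the reduced norm is nrd(x) = x * conj(x) (a rational scalar).\<close>
definition qconj :: "quat \<Rightarrow> quat" where
  "qconj x = Quat (qc x 0) (- qc x 1) (- qc x 2) (- qc x 3)"

definition nrd :: "quat \<Rightarrow> rat" where
  "nrd x = qc (qmul x (qconj x)) 0"

definition Bunits :: "quat set" where
  "Bunits = {x. \<exists>y. qmul x y = qone \<and> qmul y x = qone}"

definition qinv :: "quat \<Rightarrow> quat" where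
  "qinv x = (THE y. qmul x y = qone \<and> qmul y x = qone)"

section \<open>The Eichler order of level 2\<close>

definition w1 :: quat where "w1 = qscale (1/6) (qsub e1 e2)"
definition w2 :: quat where "w2 = qscale (1/2) e2"
definition w3 :: quat where "w3 = qscale (1/2) (qadd qone (qscale (1/4) e3))"

definition Ord :: "quat set" where
  "Ord = {qadd (qof (of_int n0)) (qadd (qscale (of_int n1) w1)
            (qadd (qscale (of_int n2) w2) (qscale (of_int n3) w3))) | n0 n1 n2 n3 :: int. True}"

definition Ord1 :: "quat set" where
  "Ord1 = {x \<in> Ord. nrd x = 1}"

definition Ord1_2 :: "quat set" where
  "Ord1_2 = {g \<in> Ord1. qsub g qone \<in> qscale 2 ` Ord}"

definition Nplus :: "quat set" where
  "Nplus = {x \<in> Bunits. nrd x > 0 \<and> (\<lambda>y. qmul (qmul x y) (qinv x)) ` Ord = Ord}"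

definition Qstar :: "quat set" where
  "Qstar = {qof r | r. r \<noteq> 0}"

definition Nplus_group :: "quat monoid" where
  "Nplus_group = \<lparr>carrier = Nplus, monoid.mult = qmul, one = qone\<rparr>"

definition Ord1_group :: "quat monoid" where
  "Ord1_group = \<lparr>carrier = Ord1, monoid.mult = qmul, one = qone\<rparr>"

definition GammaPlus :: "quat set monoid" where
  "GammaPlus = Nplus_group Mod Qstar"

definition Gamma1 :: "quat set monoid" where
  "Gamma1 = Ord1_group Mod {qone, qof (-1)}"

definition Gamma1_2 :: "quat set set" where
  "Gamma1_2 = (\<lambda>g. r_coset Ord1_group {qone, qof (-1)} g) ` Ord1_2"

text \<open>Images of Gamma^1(O) and Gamma^1(O)[2] in Gamma^+(O) under the (injective)
  map gamma {+-1} \<mapsto> gamma Q^x.\<close>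
definition Gamma1_in_plus :: "quat set set" where
  "Gamma1_in_plus = (\<lambda>g. r_coset Nplus_group Qstar g) ` Ord1"

definition Gamma1_2_in_plus :: "quat set set" where
  "Gamma1_2_in_plus = (\<lambda>g. r_coset Nplus_group Qstar g) ` Ord1_2"

definition C2 :: "int monoid" where "C2 = integer_mod_group 2"

text \<open>Dihedral group of order 8: pairs (a,s) standing for r^a s^s with r^4 = s^2 = 1,
  s r s = r^-1.\<close>
definition D8 :: "(int \<times> int) monoid" where
  "D8 = \<lparr>carrier = {0..<4} \<times> {0..<2},
         monoid.mult = (\<lambda>(a, s) (b, t). ((a + (if s = 0 then b else - b)) mod 4, (s + t) mod 2)),
         one = (0, 0)\<rparr>"

end

theory Submission
  imports Defs
begin


lemma qmul_Quat: "qmul (Quat a0 a1 a2 a3) (Quat b0 b1 b2 b3) = Quat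
 (a0 * b0 + 48 * a1 * b1 + 12 * a1 * b2 + 12 * a2 * b1 + 48 * a2 * b2 - 240 * a3 * b3)
 (a0 * b1 + a1 * b0 + 4 * a1 * b3 + 16 * a2 * b3 - 4 * a3 * b1 - 16 * a3 * b2)
 (a0 * b2 - 16 * a1 * b3 + a2 * b0 - 4 * a2 * b3 + 16 * a3 * b1 + 4 * a3 * b2)
 (a0 * b3 - 3 * a1 * b2 + 3 * a2 * b1 + a3 * b0)"
  by (simp add: qmul_def qsum_def qadd_def qscale_def qzero_def qone_def qof_def e1_def e2_def e3_def
      algebra_simps)

lemma qmul_assoc: "qmul (qmul x y) z = qmul x (qmul y z)"
  by (cases x; cases y; cases z) (simp add: qmul_Quat algebra_simps)

definition wq :: "rat \<Rightarrow> rat \<Rightarrow> rat \<Rightarrow> rat \<Rightarrow> quat" where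
  "wq a b c d = Quat (a + d/2) (b/6) (c/2 - b/6) (d/8)"

lemma wq_mul: "qmul (wq a0 a1 a2 a3) (wq b0 b1 b2 b3) = wq
 (a0 * b0 + 2 * a1 * b1 - 2 * a1 * b2 - 4 * a2 * b1 + 12 * a2 * b2 - 4 * a3 * b3)
 (a0 * b1 + a1 * b0 - a1 * b3 + 6 * a2 * b3 + 2 * a3 * b1 - 6 * a3 * b2)
 (a0 * b2 - a1 * b3 + a2 * b0 + 2 * a2 * b3 + a3 * b1 - a3 * b2)
 (a0 * b3 - 2 * a1 * b2 + 2 * a2 * b1 + a3 * b0 + a3 * b3)"
  by (simp add: wq_def qmul_Quat field_simps)


lemma quat_eq_wq: "x = wq (qc x 0 - 4 * qc x 3) (6 * qc x 1) (2 * qc x 1 + 2 * qc x 2) (8 * qc x 3)"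
  by (cases x) (simp add: wq_def field_simps)

lemma quat_wq_cases: obtains a b c d where "x = wq a b c d"
  using quat_eq_wq by blast

lemma wq_inj[simp]: "wq a b c d = wq a2 b2 c2 d2 \<longleftrightarrow> a = a2 \<and> b = b2 \<and> c = c2 \<and> d = d2"
  by (auto simp: wq_def)

lemma qadd_wq: "qadd (wq a b c d) (wq a2 b2 c2 d2) = wq (a + a2) (b + b2) (c + c2) (d + d2)"
  by (simp add: wq_def qadd_def algebra_simps)
lemma qscale_wq: "qscale r (wq a b c d) = wq (r * a) (r * b) (r * c) (r * d)"
  by (simp add: wq_def qscale_def algebra_simps)
lemma qsub_wq: "qsub (wq a b c d) (wq a2 b2 c2 d2) = wq (a - a2) (b - b2) (c - c2) (d - d2)"
  by (simp add: qsub_def qscale_wq qadd_wq)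
lemma qof_wq: "qof r = wq r 0 0 0" by (simp add: wq_def qof_def)
lemma qone_wq: "qone = wq 1 0 0 0" by (simp add: qone_def qof_wq)
lemma qzero_wq: "qzero = wq 0 0 0 0" by (simp add: wq_def qzero_def)
lemma w1_wq: "w1 = wq 0 1 0 0" by (simp add: w1_def wq_def qsub_def qadd_def qscale_def e1_def e2_def)
lemma w2_wq: "w2 = wq 0 0 1 0" by (simp add: w2_def wq_def qscale_def e2_def)
lemma w3_wq: "w3 = wq 0 0 0 1" by (simp add: w3_def wq_def qadd_def qscale_def e3_def qone_def qof_def)
lemma qconj_wq: "qconj (wq a b c d) = wq (a + d) (-b) (-c) (-d)"
  by (simp add: wq_def qconj_def algebra_simps)

definition nform :: "rat \<Rightarrow> rat \<Rightarrow> rat \<Rightarrow> rat \<Rightarrow> rat" where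
  "nform a b c d = a^2 + a * d - 2 * b^2 + 6 * b * c - 12 * c^2 + 4 * d^2"

lemma qmul_conj_wq: "qmul (wq a b c d) (qconj (wq a b c d)) = qof (nform a b c d)"
  by (simp add: qconj_wq wq_mul qof_wq nform_def power2_eq_square algebra_simps)
lemma qmul_conj_wq': "qmul (qconj (wq a b c d)) (wq a b c d) = qof (nform a b c d)"
  by (simp add: qconj_wq wq_mul qof_wq nform_def power2_eq_square algebra_simps)
lemma nrd_wq: "nrd (wq a b c d) = nform a b c d"
  by (simp add: nrd_def qmul_conj_wq qof_def)

lemma qmul_conj: "qmul x (qconj x) = qof (nrd x)"
  by (cases x rule: quat_wq_cases) (simp add: qmul_conj_wq nrd_wq)
lemma qmul_conj': "qmul (qconj x) x = qof (nrd x)"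
  by (cases x rule: quat_wq_cases) (simp add: qmul_conj_wq' nrd_wq)

lemma nrd_mul: "nrd (qmul x y) = nrd x * nrd y"
  by (cases x rule: quat_wq_cases; cases y rule: quat_wq_cases)
     (simp add: nrd_wq wq_mul nform_def power2_eq_square algebra_simps)

lemma conj_mul: "qconj (qmul x y) = qmul (qconj y) (qconj x)"
  by (cases x rule: quat_wq_cases; cases y rule: quat_wq_cases)
     (simp add: qconj_wq wq_mul algebra_simps)

lemma qmul_one[simp]: "qmul x qone = x" "qmul qone x = x"
  by (cases x rule: quat_wq_cases; simp add: qone_wq wq_mul)+

lemma qmul_qof: "qmul (qof r) x = qscale r x" "qmul x (qof r) = qscale r x"
  by (cases x rule: quat_wq_cases; simp add: qof_wq wq_mul qscale_wq algebra_simps)+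

lemma qscale_mul: "qmul (qscale r x) y = qscale r (qmul x y)" "qmul x (qscale r y) = qscale r (qmul x y)"
  by (cases x rule: quat_wq_cases; cases y rule: quat_wq_cases; simp add: wq_mul qscale_wq algebra_simps)+

lemma qscale_scale[simp]: "qscale r (qscale s x) = qscale (r * s) x"
  by (cases x rule: quat_wq_cases; simp add: qscale_wq algebra_simps)
lemma qscale_one[simp]: "qscale 1 x = x"
  by (cases x rule: quat_wq_cases; simp add: qscale_wq)
lemma nrd_scale: "nrd (qscale r x) = r^2 * nrd x"
  by (cases x rule: quat_wq_cases; simp add: qscale_wq nrd_wq nform_def power2_eq_square algebra_simps)
lemma nrd_qof: "nrd (qof r) = r^2" by (simp add: qof_wq nrd_wq nform_def)
lemma nrd_conj: "nrd (qconj x) = nrd x"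
  by (cases x rule: quat_wq_cases; simp add: qconj_wq nrd_wq nform_def power2_eq_square algebra_simps)

lemma Bunits_iff: "x \<in> Bunits \<longleftrightarrow> nrd x \<noteq> 0"
proof
  assume "x \<in> Bunits"
  then obtain y where "qmul x y = qone" unfolding Bunits_def by auto
  hence "nrd x * nrd y = 1" using nrd_mul[of x y] by (simp add: qone_def nrd_qof)
  thus "nrd x \<noteq> 0" by auto
next
  assume "nrd x \<noteq> 0"
  hence "qmul x (qscale (1/nrd x) (qconj x)) = qone \<and> qmul (qscale (1/nrd x) (qconj x)) x = qone"
    by (simp add: qscale_mul qmul_conj qmul_conj' qof_wq qone_wq qscale_wq)
  thus "x \<in> Bunits" unfolding Bunits_def by blast
qed

lemma qinv_unique: assumes "qmul x y = qone" "qmul y x = qone" shows "qinv x = y"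
  unfolding qinv_def
proof (rule the_equality[where P="\<lambda>y. qmul x y = qone \<and> qmul y x = qone"])
  show "qmul x y = qone \<and> qmul y x = qone" using assms by simp
  fix z assume "qmul x z = qone \<and> qmul z x = qone"
  hence "qmul (qmul y x) z = qmul y (qmul x z)" "qmul x z = qone" by (simp_all add: qmul_assoc)
  thus "z = y" using assms by simp
qed

lemma qinv_eq: assumes "nrd x \<noteq> 0" shows "qinv x = qscale (1/nrd x) (qconj x)"
  by (rule qinv_unique) (use assms in \<open>simp_all add: qscale_mul qmul_conj qmul_conj' qof_wq qone_wq qscale_wq\<close>)

lemma qinv_r: "nrd x \<noteq> 0 \<Longrightarrow> qmul x (qinv x) = qone"
  by (simp add: qinv_eq qscale_mul qmul_conj qof_wq qone_wq qscale_wq)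
lemma qinv_l: "nrd x \<noteq> 0 \<Longrightarrow> qmul (qinv x) x = qone"
  by (simp add: qinv_eq qscale_mul qmul_conj' qof_wq qone_wq qscale_wq)
lemma nrd_qinv: "nrd x \<noteq> 0 \<Longrightarrow> nrd (qinv x) = 1 / nrd x"
  by (simp add: qinv_eq nrd_scale nrd_conj power2_eq_square)
lemma qinv_mul: "nrd x \<noteq> 0 \<Longrightarrow> nrd y \<noteq> 0 \<Longrightarrow> qinv (qmul x y) = qmul (qinv y) (qinv x)"
  by (simp add: qinv_eq nrd_mul conj_mul qscale_mul)
lemma qinv_qinv: "nrd x \<noteq> 0 \<Longrightarrow> qinv (qinv x) = x"
  by (rule qinv_unique) (simp_all add: qinv_l qinv_r)


definition wi :: "int \<Rightarrow> int \<Rightarrow> int \<Rightarrow> int \<Rightarrow> quat" where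
  "wi a b c d = wq (of_int a) (of_int b) (of_int c) (of_int d)"

lemma Ord_iff: "x \<in> Ord \<longleftrightarrow> (\<exists>a b c d. x = wi a b c d)"
  by (auto simp: Ord_def wi_def qof_wq w1_wq w2_wq w3_wq qscale_wq qadd_wq)

lemma wi_Ord[simp]: "wi a b c d \<in> Ord" using Ord_iff by blast

lemma wi_mul: "qmul (wi a0 a1 a2 a3) (wi b0 b1 b2 b3) = wi
 (a0 * b0 + 2 * a1 * b1 - 2 * a1 * b2 - 4 * a2 * b1 + 12 * a2 * b2 - 4 * a3 * b3)
 (a0 * b1 + a1 * b0 - a1 * b3 + 6 * a2 * b3 + 2 * a3 * b1 - 6 * a3 * b2)
 (a0 * b2 - a1 * b3 + a2 * b0 + 2 * a2 * b3 + a3 * b1 - a3 * b2)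
 (a0 * b3 - 2 * a1 * b2 + 2 * a2 * b1 + a3 * b0 + a3 * b3)"
  by (simp add: wi_def wq_mul)

lemma wi_inj[simp]: "wi a b c d = wi a2 b2 c2 d2 \<longleftrightarrow> a = a2 \<and> b = b2 \<and> c = c2 \<and> d = d2"
  by (simp add: wi_def)

lemma Ord_mul: "x \<in> Ord \<Longrightarrow> y \<in> Ord \<Longrightarrow> qmul x y \<in> Ord"
  by (auto simp: Ord_iff wi_mul)
lemma conj_wi: "qconj (wi a b c d) = wi (a + d) (- b) (- c) (- d)"
  by (simp add: wi_def qconj_wq)
lemma qone_wi: "qone = wi 1 0 0 0" by (simp add: wi_def qone_wq)
lemma qof_wi: "qof (of_int k) = wi k 0 0 0" by (simp add: wi_def qof_wq)
lemma Ord_conj: "x \<in> Ord \<Longrightarrow> qconj x \<in> Ord"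
  by (auto simp: Ord_iff conj_wi)
lemma Ord_one[simp]: "qone \<in> Ord" by (simp add: qone_wi)
lemma Ord_qof_int: "qof (of_int k) \<in> Ord" by (simp add: qof_wi)
lemma nrd_wi: "nrd (wi a b c d) = of_int (a^2 + a * d - 2 * b^2 + 6 * b * c - 12 * c^2 + 4 * d^2)"
  by (simp add: wi_def nrd_wq nform_def)

definition cj :: "quat \<Rightarrow> quat \<Rightarrow> quat" where "cj x y = qmul (qmul x y) (qinv x)"

lemma qinv_cancel: "nrd x \<noteq> 0 \<Longrightarrow> qmul (qinv x) (qmul x y) = y"
   "nrd x \<noteq> 0 \<Longrightarrow> qmul x (qmul (qinv x) y) = y"
  by (simp_all add: qinv_l qinv_r flip: qmul_assoc)
lemma qinv_qof: "r \<noteq> 0 \<Longrightarrow> qinv (qof r) = qof (1/r)"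
  by (rule qinv_unique) (simp_all add: qof_wq wq_mul qone_wq)

lemma cj_mul: "nrd x \<noteq> 0 \<Longrightarrow> nrd y \<noteq> 0 \<Longrightarrow> cj (qmul x y) z = cj x (cj y z)"
  by (simp add: cj_def qinv_mul qmul_assoc)
lemma cj_inv: "nrd x \<noteq> 0 \<Longrightarrow> cj (qinv x) (cj x z) = z"
  by (simp add: cj_def qinv_qinv qmul_assoc qinv_cancel qinv_l)
lemma cj_inv': "nrd x \<noteq> 0 \<Longrightarrow> cj x (cj (qinv x) z) = z"
  by (simp add: cj_def qinv_qinv qmul_assoc qinv_cancel qinv_r)

lemma Nplus_iff: "x \<in> Nplus \<longleftrightarrow> nrd x > 0 \<and> cj x ` Ord = Ord"
  by (auto simp: Nplus_def Bunits_iff cj_def)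

lemma Nplus_mul: assumes "x \<in> Nplus" "y \<in> Nplus" shows "qmul x y \<in> Nplus"
proof -
  have n: "nrd x > 0" "nrd y > 0" and c: "cj x ` Ord = Ord" "cj y ` Ord = Ord" using assms by (auto simp: Nplus_iff)
  have "cj (qmul x y) ` Ord = cj x ` cj y ` Ord" using n by (auto simp: cj_mul image_image)
  thus ?thesis using n c by (simp add: Nplus_iff nrd_mul)
qed

lemma Nplus_inv: assumes "x \<in> Nplus" shows "qinv x \<in> Nplus"
proof -
  have n: "nrd x > 0" and c: "cj x ` Ord = Ord" using assms by (auto simp: Nplus_iff)
  have "cj (qinv x) ` Ord = cj (qinv x) ` cj x ` Ord" using c by simp
  also have "\<dots> = Ord" using n by (simp add: image_image cj_inv)
  finally show ?thesis using n by (simp add: Nplus_iff nrd_qinv)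
qed

lemma Nplus_nrd: "x \<in> Nplus \<Longrightarrow> nrd x > 0" by (simp add: Nplus_iff)

lemma Nplus_one: "qone \<in> Nplus"
proof -
  have "cj qone y = y" for y using qinv_unique[of qone qone] by (simp add: cj_def)
  thus ?thesis by (simp add: Nplus_iff qone_def nrd_qof)
qed

lemma Nplus_group_group: "group Nplus_group"
  apply (rule groupI)
  apply (auto simp: Nplus_group_def Nplus_mul Nplus_one qmul_assoc)
  apply (rule_tac x="qinv x" in bexI)
   apply (auto simp: Nplus_inv qinv_l dest!: Nplus_nrd)
  done

lemma Nplus_group_inv: assumes "x \<in> Nplus" shows "inv\<^bsub>Nplus_group\<^esub> x = qinv x"
  apply (rule group.inv_equality[OF Nplus_group_group])
  using assms Nplus_nrd[OF assms] by (auto simp: Nplus_group_def Nplus_inv qinv_l)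

lemma qof_Nplus: assumes "r \<noteq> 0" shows "qof r \<in> Nplus"
proof -
  have "cj (qof r) y = y" for y
    using assms by (simp add: cj_def qinv_qof qmul_qof qscale_mul)
  thus ?thesis using assms by (simp add: Nplus_iff nrd_qof)
qed

lemma qscale_qone: "qscale r qone = qof r" by (simp add: qone_wq qof_wq qscale_wq)
lemma cj_qof: "nrd x \<noteq> 0 \<Longrightarrow> qmul (qmul x (qof r)) (qinv x) = qof r"
  by (simp add: qmul_qof qscale_mul qinv_r qscale_qone)

lemma Qstar_normal: "Qstar \<lhd> Nplus_group"
proof -
  interpret group Nplus_group by (rule Nplus_group_group)
  have sub: "subgroup Qstar Nplus_group"
  proof (rule subgroupI)
    show "Qstar \<subseteq> carrier Nplus_group" by (auto simp: Qstar_def Nplus_group_def qof_Nplus)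
    show "Qstar \<noteq> {}" by (auto simp: Qstar_def intro!: exI[of _ 1])
    fix a b assume a: "a \<in> Qstar" and b: "b \<in> Qstar"
    then obtain r s where rs: "a = qof r" "r \<noteq> 0" "b = qof s" "s \<noteq> 0" by (auto simp: Qstar_def)
    show "inv\<^bsub>Nplus_group\<^esub> a \<in> Qstar" using rs
      by (auto simp: Nplus_group_inv[OF qof_Nplus] Qstar_def qinv_qof)
    show "a \<otimes>\<^bsub>Nplus_group\<^esub> b \<in> Qstar" using rs
      by (auto simp: Nplus_group_def Qstar_def qof_wq wq_mul)
  qed
  show ?thesis
  proof (simp only: normal_inv_iff sub, intro conjI TrueI ballI)
    fix x h assume x: "x \<in> carrier Nplus_group" and h: "h \<in> Qstar"
    then obtain r where "h = qof r" "r \<noteq> 0" by (auto simp: Qstar_def)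
    moreover have "x \<in> Nplus" using x by (simp add: Nplus_group_def)
    ultimately show "x \<otimes>\<^bsub>Nplus_group\<^esub> h \<otimes>\<^bsub>Nplus_group\<^esub> inv\<^bsub>Nplus_group\<^esub> x \<in> Qstar"
      using Nplus_nrd[of x] Nplus_group_inv[of x]
      by (auto simp: Qstar_def Nplus_group_def cj_qof)
  qed
qed


lemma quot_iso:
  fixes G :: "('a, 'm) monoid_scheme" and T :: "('b, 'n) monoid_scheme"
  assumes G: "group G" and N: "Z \<lhd> G" and T: "group T" and hom: "\<Psi> \<in> hom G T"
  and surj: "\<Psi> ` carrier G = carrier T"
  and const: "\<And>z. z \<in> Z \<Longrightarrow> \<Psi> z = \<one>\<^bsub>T\<^esub>"
  and S: "S \<subseteq> carrier G"
  and ker: "\<And>x. x \<in> carrier G \<Longrightarrow> \<Psi> x = \<one>\<^bsub>T\<^esub> \<longleftrightarrow> (\<exists>s\<in>S. x \<in> Z #>\<^bsub>G\<^esub> s)"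
  shows "(G Mod Z) Mod ((\<lambda>g. Z #>\<^bsub>G\<^esub> g) ` S) \<cong> T"
proof -
  interpret G: group G by (rule G)
  interpret T: group T by (rule T)
  interpret N: normal Z G by (rule N)
  interpret GT: group_hom G T \<Psi>
    by (rule group_hom.intro[OF G T]) (simp add: group_hom_axioms_def hom)
  have sub: "subgroup Z G" by (rule N.subgroup_axioms)
  have img: "\<Psi> ` (Z #>\<^bsub>G\<^esub> x) = {\<Psi> x}" if x: "x \<in> carrier G" for x
  proof
    show "\<Psi> ` (Z #>\<^bsub>G\<^esub> x) \<subseteq> {\<Psi> x}"
    proof
      fix y assume "y \<in> \<Psi> ` (Z #>\<^bsub>G\<^esub> x)"
      then obtain z where z: "z \<in> Z" "y = \<Psi> (z \<otimes>\<^bsub>G\<^esub> x)" by (auto simp: r_coset_def)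
      hence "z \<in> carrier G" using sub subgroup.subset by blast
      thus "y \<in> {\<Psi> x}" using z x const by simp
    qed
    show "{\<Psi> x} \<subseteq> \<Psi> ` (Z #>\<^bsub>G\<^esub> x)" using G.rcos_self[OF x sub] by auto
  qed
  define h where "h = (\<lambda>C. the_elem (\<Psi> ` C))"
  have hx: "h (Z #>\<^bsub>G\<^esub> x) = \<Psi> x" if "x \<in> carrier G" for x using img[OF that] by (simp add: h_def)
  have grpF: "group (G Mod Z)" by (rule N.factorgroup_is_group)
  have hh: "h \<in> hom (G Mod Z) T"
  proof (rule homI)
    fix C assume "C \<in> carrier (G Mod Z)"
    then obtain x where x: "x \<in> carrier G" "C = Z #>\<^bsub>G\<^esub> x" by (auto simp: FactGroup_def RCOSETS_def)
    thus "h C \<in> carrier T" using hx by simp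
  next
    fix C D assume "C \<in> carrier (G Mod Z)" "D \<in> carrier (G Mod Z)"
    then obtain x y where x: "x \<in> carrier G" "C = Z #>\<^bsub>G\<^esub> x" and y: "y \<in> carrier G" "D = Z #>\<^bsub>G\<^esub> y"
      by (auto simp: FactGroup_def RCOSETS_def)
    have "C \<otimes>\<^bsub>G Mod Z\<^esub> D = Z #>\<^bsub>G\<^esub> (x \<otimes>\<^bsub>G\<^esub> y)" using x y by (simp add: FactGroup_def N.rcos_sum)
    thus "h (C \<otimes>\<^bsub>G Mod Z\<^esub> D) = h C \<otimes>\<^bsub>T\<^esub> h D" using x y hx by simp
  qed
  interpret H: group_hom "G Mod Z" T h
    by (rule group_hom.intro[OF grpF T]) (simp add: group_hom_axioms_def hh)
  have hsurj: "h ` carrier (G Mod Z) = carrier T"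
  proof
    show "h ` carrier (G Mod Z) \<subseteq> carrier T" using hh by (auto simp: hom_def)
    show "carrier T \<subseteq> h ` carrier (G Mod Z)"
    proof
      fix t assume "t \<in> carrier T"
      then obtain x where x: "x \<in> carrier G" "t = \<Psi> x" using surj by auto
      hence "Z #>\<^bsub>G\<^esub> x \<in> carrier (G Mod Z)" by (simp add: FactGroup_def RCOSETS_def) blast
      thus "t \<in> h ` carrier (G Mod Z)" using x hx by force
    qed
  qed
  have kk: "kernel (G Mod Z) T h = (\<lambda>g. Z #>\<^bsub>G\<^esub> g) ` S"
  proof
    show "kernel (G Mod Z) T h \<subseteq> (\<lambda>g. Z #>\<^bsub>G\<^esub> g) ` S"
    proof
      fix C assume "C \<in> kernel (G Mod Z) T h"
      then obtain x where x: "x \<in> carrier G" "C = Z #>\<^bsub>G\<^esub> x" "h C = \<one>\<^bsub>T\<^esub>"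
        by (auto simp: kernel_def FactGroup_def RCOSETS_def)
      then obtain s where s: "s \<in> S" "x \<in> Z #>\<^bsub>G\<^esub> s" using ker hx by auto
      have "Z #>\<^bsub>G\<^esub> s = Z #>\<^bsub>G\<^esub> x" using G.repr_independence[OF s(2) _ sub] s S by auto
      thus "C \<in> (\<lambda>g. Z #>\<^bsub>G\<^esub> g) ` S" using s x by auto
    qed
    show "(\<lambda>g. Z #>\<^bsub>G\<^esub> g) ` S \<subseteq> kernel (G Mod Z) T h"
    proof
      fix C assume "C \<in> (\<lambda>g. Z #>\<^bsub>G\<^esub> g) ` S"
      then obtain s where s: "s \<in> S" "C = Z #>\<^bsub>G\<^esub> s" by auto
      have sc: "s \<in> carrier G" using s S by auto
      have "\<Psi> s = \<one>\<^bsub>T\<^esub>" using ker[OF sc] s G.rcos_self[OF sc sub] by auto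
      thus "C \<in> kernel (G Mod Z) T h" using s sc hx
        by (auto simp: kernel_def FactGroup_def RCOSETS_def)
    qed
  qed
  show ?thesis using H.FactGroup_iso[OF hsurj] kk by simp
qed


lemma w1_wi: "w1 = wi 0 1 0 0" by (simp add: wi_def w1_wq)
lemma w2_wi: "w2 = wi 0 0 1 0" by (simp add: wi_def w2_wq)
lemma w3_wi: "w3 = wi 0 0 0 1" by (simp add: wi_def w3_wq)

lemma conj_w1: "qmul (qmul (wi n0 n1 n2 n3) w1) (qconj (wi n0 n1 n2 n3)) = wi
  (- 2 * n0 * n2 + 2 * n1 * n3 - 4 * n2 * n3) (n0^2 + 4 * n0 * n3 - 2 * n1^2 + 12 * n2^2 - 2 * n3^2)
  (2 * n0 * n3 - 4 * n1 * n2 + 6 * n2^2 + n3^2) (4 * n0 * n2 - 4 * n1 * n3 + 8 * n2 * n3)"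
  by (simp add: w1_wi conj_wi wi_mul power2_eq_square algebra_simps)
lemma conj_w2: "qmul (qmul (wi n0 n1 n2 n3) w2) (qconj (wi n0 n1 n2 n3)) = wi
  (2 * n0 * n1 - 2 * n1 * n3 + 12 * n2 * n3) (- 12 * n0 * n3 + 6 * n1^2 - 24 * n1 * n2 - 6 * n3^2)
  (n0^2 - 2 * n0 * n3 + 2 * n1^2 - 12 * n2^2 - 5 * n3^2) (- 4 * n0 * n1 + 4 * n1 * n3 - 24 * n2 * n3)"
  by (simp add: w2_wi conj_wi wi_mul power2_eq_square algebra_simps)
lemma conj_w3: "qmul (qmul (wi n0 n1 n2 n3) w3) (qconj (wi n0 n1 n2 n3)) = wi
  (- 2 * n1^2 + 6 * n1 * n2 - 12 * n2^2) (- 3 * n0 * n1 + 12 * n0 * n2 + 6 * n1 * n3 + 6 * n2 * n3)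
  (- 2 * n0 * n1 + 3 * n0 * n2 - n1 * n3 + 9 * n2 * n3) (n0^2 + n0 * n3 + 2 * n1^2 - 6 * n1 * n2 + 12 * n2^2 + 4 * n3^2)"
  by (simp add: w3_wi conj_wi wi_mul power2_eq_square algebra_simps)

definition nf :: "int \<Rightarrow> int \<Rightarrow> int \<Rightarrow> int \<Rightarrow> int" where
  "nf n0 n1 n2 n3 = n0^2 + n0 * n3 - 2 * n1^2 + 6 * n1 * n2 - 12 * n2^2 + 4 * n3^2"

lemma nrd_wi': "nrd (wi a b c d) = of_int (nf a b c d)" by (simp add: nrd_wi nf_def)

lemma cert:
  fixes n0 n1 n2 n3 :: int
  defines "N \<equiv> nf n0 n1 n2 n3"
  assumes h11: "N dvd (n0^2 + 4 * n0 * n3 - 2 * n1^2 + 12 * n2^2 - 2 * n3^2)"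
      and h12: "N dvd (2 * n0 * n3 - 4 * n1 * n2 + 6 * n2^2 + n3^2)"
      and h21: "N dvd (- 12 * n0 * n3 + 6 * n1^2 - 24 * n1 * n2 - 6 * n3^2)"
      and h22: "N dvd (n0^2 - 2 * n0 * n3 + 2 * n1^2 - 12 * n2^2 - 5 * n3^2)"
      and h30: "N dvd (- 2 * n1^2 + 6 * n1 * n2 - 12 * n2^2)"
  shows "N dvd 30 * n0^2" "N dvd 30 * n1^2" "N dvd 30 * n2^2" "N dvd 30 * n3^2"
proof -
  have h00: "N dvd N" by simp
  obtain a where a: "n0^2 + 4 * n0 * n3 - 2 * n1^2 + 12 * n2^2 - 2 * n3^2 = N * a" using h11 by (elim dvdE) blast
  obtain b where b: "2 * n0 * n3 - 4 * n1 * n2 + 6 * n2^2 + n3^2 = N * b" using h12 by (elim dvdE) blast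
  obtain c where c: "- 12 * n0 * n3 + 6 * n1^2 - 24 * n1 * n2 - 6 * n3^2 = N * c" using h21 by (elim dvdE) blast
  obtain d where d: "n0^2 - 2 * n0 * n3 + 2 * n1^2 - 12 * n2^2 - 5 * n3^2 = N * d" using h22 by (elim dvdE) blast
  obtain e where e: "- 2 * n1^2 + 6 * n1 * n2 - 12 * n2^2 = N * e" using h30 by (elim dvdE) blast
  have "30 * n0^2 = (16) * N + (10) * (n0^2 + 4 * n0 * n3 - 2 * n1^2 + 12 * n2^2 - 2 * n3^2) + (-12) * (2 * n0 * n3 - 4 * n1 * n2 + 6 * n2^2 + n3^2) + (2) * (- 12 * n0 * n3 + 6 * n1^2 - 24 * n1 * n2 - 6 * n3^2) + (4) * (n0^2 - 2 * n0 * n3 + 2 * n1^2 - 12 * n2^2 - 5 * n3^2) + (-16) * (- 2 * n1^2 + 6 * n1 * n2 - 12 * n2^2)"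
    unfolding N_def nf_def by (simp add: algebra_simps power2_eq_square)
  also have "\<dots> = (16) * N + (10) * (N * a) + (-12) * (N * b) + (2) * (N * c) + (4) * (N * d) + (-16) * (N * e)" by (simp only: a b c d e)
  also have "\<dots> = N * ((16) * 1 + (10) * a + (-12) * b + (2) * c + (4) * d + (-16) * e)" by (simp add: algebra_simps)
  finally show "N dvd 30 * n0^2" by simp
  have "30 * n1^2 = (-6) * (n0^2 + 4 * n0 * n3 - 2 * n1^2 + 12 * n2^2 - 2 * n3^2) + (-3) * (- 12 * n0 * n3 + 6 * n1^2 - 24 * n1 * n2 - 6 * n3^2) + (6) * (n0^2 - 2 * n0 * n3 + 2 * n1^2 - 12 * n2^2 - 5 * n3^2) + (-12) * (- 2 * n1^2 + 6 * n1 * n2 - 12 * n2^2)"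
    unfolding N_def nf_def by (simp add: algebra_simps power2_eq_square)
  also have "\<dots> = (-6) * (N * a) + (-3) * (N * c) + (6) * (N * d) + (-12) * (N * e)" by (simp only: a b c d e)
  also have "\<dots> = N * ((-6) * a + (-3) * c + (6) * d + (-12) * e)" by (simp add: algebra_simps)
  finally show "N dvd 30 * n1^2" by simp
  have "30 * n2^2 = (1) * (n0^2 + 4 * n0 * n3 - 2 * n1^2 + 12 * n2^2 - 2 * n3^2) + (-3) * (2 * n0 * n3 - 4 * n1 * n2 + 6 * n2^2 + n3^2) + (-1) * (n0^2 - 2 * n0 * n3 + 2 * n1^2 - 12 * n2^2 - 5 * n3^2) + (-2) * (- 2 * n1^2 + 6 * n1 * n2 - 12 * n2^2)"
    unfolding N_def nf_def by (simp add: algebra_simps power2_eq_square)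
  also have "\<dots> = (1) * (N * a) + (-3) * (N * b) + (-1) * (N * d) + (-2) * (N * e)" by (simp only: a b c d e)
  also have "\<dots> = N * ((1) * a + (-3) * b + (-1) * d + (-2) * e)" by (simp add: algebra_simps)
  finally show "N dvd 30 * n2^2" by simp
  have "30 * n3^2 = (4) * N + (-2) * (n0^2 + 4 * n0 * n3 - 2 * n1^2 + 12 * n2^2 - 2 * n3^2) + (-2) * (n0^2 - 2 * n0 * n3 + 2 * n1^2 - 12 * n2^2 - 5 * n3^2) + (-4) * (- 2 * n1^2 + 6 * n1 * n2 - 12 * n2^2)"
    unfolding N_def nf_def by (simp add: algebra_simps power2_eq_square)
  also have "\<dots> = (4) * N + (-2) * (N * a) + (-2) * (N * d) + (-4) * (N * e)" by (simp only: a b c d e)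
  also have "\<dots> = N * ((4) * 1 + (-2) * a + (-2) * d + (-4) * e)" by (simp add: algebra_simps)
  finally show "N dvd 30 * n3^2" by simp
qed


lemma rat_common:
  fixes a b c d :: rat
  obtains D m0 m1 m2 m3 :: int where "D > 0" "a = of_int m0 / of_int D" "b = of_int m1 / of_int D"
    "c = of_int m2 / of_int D" "d = of_int m3 / of_int D"
proof -
  obtain p0 q0 where 0: "quotient_of a = (p0, q0)" by fastforce
  obtain p1 q1 where 1: "quotient_of b = (p1, q1)" by fastforce
  obtain p2 q2 where 2: "quotient_of c = (p2, q2)" by fastforce
  obtain p3 q3 where 3: "quotient_of d = (p3, q3)" by fastforce
  have q: "q0 > 0" "q1 > 0" "q2 > 0" "q3 > 0" using 0 1 2 3 quotient_of_denom_pos by blast+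
  have e: "a = of_int p0 / of_int q0" "b = of_int p1 / of_int q1" "c = of_int p2 / of_int q2" "d = of_int p3 / of_int q3"
    using 0 1 2 3 quotient_of_div by blast+
  show ?thesis
    apply (rule that[of "q0 * q1 * q2 * q3" "p0 * q1 * q2 * q3" "p1 * q0 * q2 * q3" "p2 * q0 * q1 * q3" "p3 * q0 * q1 * q2"])
    using q by (auto simp: e)
qed

lemma prim:
  fixes m0 m1 m2 m3 :: int
  assumes "\<not> (m0 = 0 \<and> m1 = 0 \<and> m2 = 0 \<and> m3 = 0)"
  obtains G n0 n1 n2 n3 where "G > 0" "m0 = G * n0" "m1 = G * n1" "m2 = G * n2" "m3 = G * n3"
    "gcd (gcd n0 n1) (gcd n2 n3) = 1"
proof -
  define G where "G = gcd (gcd m0 m1) (gcd m2 m3)"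
  have "G \<noteq> 0" using assms unfolding G_def by simp
  moreover have "G \<ge> 0" unfolding G_def by simp
  ultimately have Gp: "G > 0" by simp
  have dv: "G dvd m0" "G dvd m1" "G dvd m2" "G dvd m3" unfolding G_def
    by (meson dvd_trans gcd_dvd1 gcd_dvd2)+
  obtain n0 where n0: "m0 = G * n0" using dv(1) by (rule dvdE)
  obtain n1 where n1: "m1 = G * n1" using dv(2) by (rule dvdE)
  obtain n2 where n2: "m2 = G * n2" using dv(3) by (rule dvdE)
  obtain n3 where n3: "m3 = G * n3" using dv(4) by (rule dvdE)
  have a: "gcd (G * n0) (G * n1) = G * gcd n0 n1" using gcd_mult_distrib_int[of G n0 n1] Gp by simp
  have b: "gcd (G * n2) (G * n3) = G * gcd n2 n3" using gcd_mult_distrib_int[of G n2 n3] Gp by simp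
  have c: "gcd (G * gcd n0 n1) (G * gcd n2 n3) = G * gcd (gcd n0 n1) (gcd n2 n3)"
    using gcd_mult_distrib_int[of G "gcd n0 n1" "gcd n2 n3"] Gp by simp
  have "G = G * gcd (gcd n0 n1) (gcd n2 n3)"
    using G_def n0 n1 n2 n3 a b c by simp
  hence "gcd (gcd n0 n1) (gcd n2 n3) = 1" using Gp by simp
  thus ?thesis by (rule that[OF Gp n0 n1 n2 n3])
qed

lemma final_gcd:
  fixes N n0 n1 n2 n3 :: int
  assumes "N dvd 30 * n0^2" "N dvd 30 * n1^2" "N dvd 30 * n2^2" "N dvd 30 * n3^2"
    and "gcd (gcd n0 n1) (gcd n2 n3) = 1"
  shows "N dvd 30"
proof -
  have "N dvd gcd (gcd (30 * n0^2) (30 * n1^2)) (gcd (30 * n2^2) (30 * n3^2))"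
    using assms by simp
  also have "gcd (gcd (30 * n0^2) (30 * n1^2)) (gcd (30 * n2^2) (30 * n3^2))
     = 30 * gcd (gcd (n0^2) (n1^2)) (gcd (n2^2) (n3^2))"
    by (simp flip: gcd_mult_distrib_int)
  also have "gcd (gcd (n0^2) (n1^2)) (gcd (n2^2) (n3^2)) = 1"
  proof -
    have "gcd (n0^2) (n1^2) = (gcd n0 n1)^2" "gcd (n2^2) (n3^2) = (gcd n2 n3)^2"
      "gcd ((gcd n0 n1)^2) ((gcd n2 n3)^2) = (gcd (gcd n0 n1) (gcd n2 n3))^2" by (rule gcd_exp)+
    thus ?thesis using assms(5) by simp
  qed
  finally show ?thesis by simp
qed

lemma dvd_from_Ord:
  fixes N a b c d :: int
  assumes "qscale (1 / of_int N) (wi a b c d) \<in> Ord" "N \<noteq> 0"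
  shows "N dvd a" "N dvd b" "N dvd c" "N dvd d"
proof -
  obtain m0 m1 m2 m3 where "qscale (1 / of_int N) (wi a b c d) = wi m0 m1 m2 m3"
    using assms(1) by (auto simp: Ord_iff)
  hence e: "rat_of_int a = of_int N * of_int m0" "rat_of_int b = of_int N * of_int m1"
       "rat_of_int c = of_int N * of_int m2" "rat_of_int d = of_int N * of_int m3"
    using assms(2) by (auto simp: wi_def qscale_wq field_simps)
  have "a = N * m0" "b = N * m1" "c = N * m2" "d = N * m3"
    using e by (metis of_int_eq_iff of_int_mult)+
  thus "N dvd a" "N dvd b" "N dvd c" "N dvd d" by auto
qed

lemma cj_formula: "nrd y \<noteq> 0 \<Longrightarrow> cj y z = qscale (1 / nrd y) (qmul (qmul y z) (qconj y))"
  by (simp add: cj_def qinv_eq qscale_mul)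

lemma Nplus_scale: "x \<in> Nplus \<Longrightarrow> r \<noteq> 0 \<Longrightarrow> qscale r x \<in> Nplus"
  using Nplus_mul[OF qof_Nplus] qmul_qof by metis

lemma Nplus_struct:
  assumes x: "x \<in> Nplus"
  obtains g n0 n1 n2 n3 where "g > 0" "x = qscale g (wi n0 n1 n2 n3)" "nf n0 n1 n2 n3 > 0"
    "nf n0 n1 n2 n3 dvd 30"
proof -
  obtain a b c d where xw: "x = wq a b c d" by (rule quat_wq_cases)
  obtain D m0 m1 m2 m3 where D: "D > 0" "a = of_int m0 / of_int D" "b = of_int m1 / of_int D"
    "c = of_int m2 / of_int D" "d = of_int m3 / of_int D" by (rule rat_common)
  have nz: "\<not> (m0 = 0 \<and> m1 = 0 \<and> m2 = 0 \<and> m3 = 0)"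
  proof
    assume "m0 = 0 \<and> m1 = 0 \<and> m2 = 0 \<and> m3 = 0"
    hence "nrd x = 0" using xw D by (simp add: nrd_wq nform_def)
    thus False using Nplus_nrd[OF x] by simp
  qed
  obtain G n0 n1 n2 n3 where G: "G > 0" "m0 = G * n0" "m1 = G * n1" "m2 = G * n2" "m3 = G * n3"
    and pr: "gcd (gcd n0 n1) (gcd n2 n3) = 1" by (rule prim[OF nz])
  define g where "g = rat_of_int G / of_int D"
  have gp: "g > 0" using G D by (simp add: g_def)
  have xg: "x = qscale g (wi n0 n1 n2 n3)"
    using xw D G by (simp add: g_def wi_def qscale_wq)
  define y where "y = wi n0 n1 n2 n3"
  have "y = qscale (1/g) x" using xg gp by (simp add: y_def)
  hence y: "y \<in> Nplus" using Nplus_scale[OF x, of "1/g"] gp by simp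
  define N where "N = nf n0 n1 n2 n3"
  have Ny: "nrd y = of_int N" by (simp add: y_def N_def nrd_wi')
  have Np: "N > 0" using Nplus_nrd[OF y] Ny by simp
  have cjO: "cj y z \<in> Ord" if "z \<in> Ord" for z using y that by (auto simp: Nplus_iff)
  have key: "qscale (1 / of_int N) (qmul (qmul y z) (qconj y)) \<in> Ord" if "z \<in> Ord" for z
    using cjO[OF that] cj_formula[of y z] Ny Np by simp
  have N0: "N \<noteq> 0" using Np by simp
  have o1: "w1 \<in> Ord" "w2 \<in> Ord" "w3 \<in> Ord" by (simp_all add: w1_wi w2_wi w3_wi)
  note d1 = dvd_from_Ord[OF key[OF o1(1), unfolded y_def conj_w1] N0, unfolded N_def]
  note d2 = dvd_from_Ord[OF key[OF o1(2), unfolded y_def conj_w2] N0, unfolded N_def]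
  note d3 = dvd_from_Ord[OF key[OF o1(3), unfolded y_def conj_w3] N0, unfolded N_def]
  note c = cert[OF d1(2) d1(3) d2(2) d2(3) d3(1), folded N_def]
  have N30: "N dvd 30" by (rule final_gcd[OF c pr])
  show ?thesis
    by (rule that[OF gp xg]) (use Np N30 in \<open>simp_all add: N_def\<close>)
qed


type_synonym bq = "bool \<times> bool \<times> bool \<times> bool"

definition ic :: "quat \<Rightarrow> int \<times> int \<times> int \<times> int" where
  "ic x = (\<lfloor>qc x 0 - 4 * qc x 3\<rfloor>, \<lfloor>6 * qc x 1\<rfloor>, \<lfloor>2 * qc x 1 + 2 * qc x 2\<rfloor>, \<lfloor>8 * qc x 3\<rfloor>)"

lemma ic_wi[simp]: "ic (wi a b c d) = (a, b, c, d)"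
  by (simp add: ic_def wi_def wq_def field_simps)

definition bits :: "quat \<Rightarrow> bq" where
  "bits x = (case ic x of (a, b, c, d) \<Rightarrow> (odd (a + d), odd (b + c), odd b, odd a))"

lemma bits_wi[simp]: "bits (wi a b c d) = (odd (a + d), odd (b + c), odd b, odd a)"
  by (simp add: bits_def)

definition amul :: "bq \<Rightarrow> bq \<Rightarrow> bq" where
  "amul x y = (case x of (a, b, c, d) \<Rightarrow> case y of (a2, b2, c2, d2) \<Rightarrow>
     (a \<and> a2, (a \<and> b2) \<noteq> (b \<and> d2), (c \<and> a2) \<noteq> (d \<and> c2), d \<and> d2))"

definition axor :: "bq \<Rightarrow> bq \<Rightarrow> bq" where
  "axor x y = (case x of (a, b, c, d) \<Rightarrow> case y of (a2, b2, c2, d2) \<Rightarrow>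
     (a \<noteq> a2, b \<noteq> b2, c \<noteq> c2, d \<noteq> d2))"

lemma bits_mul_wi: "bits (qmul (wi a0 a1 a2 a3) (wi b0 b1 b2 b3)) = amul (bits (wi a0 a1 a2 a3)) (bits (wi b0 b1 b2 b3))"
  by (simp add: wi_mul amul_def) presburger


definition bz :: bq where "bz = (False, False, False, False)"
definition bone :: bq where "bone = (True, False, False, True)"

lemma qscale_wi: "qscale (of_int k) (wi a b c d) = wi (k * a) (k * b) (k * c) (k * d)"
  by (simp add: wi_def qscale_wq)
lemma qadd_wi: "qadd (wi a b c d) (wi a2 b2 c2 d2) = wi (a + a2) (b + b2) (c + c2) (d + d2)"
  by (simp add: wi_def qadd_wq)

lemma bits_mul: "x \<in> Ord \<Longrightarrow> y \<in> Ord \<Longrightarrow> bits (qmul x y) = amul (bits x) (bits y)"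
  by (auto simp: Ord_iff simp del: bits_wi intro: bits_mul_wi)

lemma bits_add: "x \<in> Ord \<Longrightarrow> y \<in> Ord \<Longrightarrow> bits (qadd x y) = axor (bits x) (bits y)"
  by (auto simp: Ord_iff qadd_wi axor_def)

lemma bits_scale: "x \<in> Ord \<Longrightarrow> bits (qscale (of_int k) x) = (if odd k then bits x else bz)"
  by (auto simp: Ord_iff qscale_wi bz_def)

lemma bits_conj: "x \<in> Ord \<Longrightarrow> bits (qconj x) = (case bits x of (a, b, c, d) \<Rightarrow> (d, b, c, a))"
  by (auto simp: Ord_iff conj_wi)

lemma bits_zero_iff: "x \<in> Ord \<Longrightarrow> bits x = bz \<longleftrightarrow> x \<in> qscale 2 ` Ord"
proof -
  assume "x \<in> Ord"
  then obtain a b c d where x: "x = wi a b c d" by (auto simp: Ord_iff)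
  show ?thesis
  proof
    assume "bits x = bz"
    hence "even a" "even b" "even c" "even d" using x by (auto simp: bz_def)
    then obtain a' b' c' d' where "a = 2 * a'" "b = 2 * b'" "c = 2 * c'" "d = 2 * d'"
      by (metis evenE)
    hence "x = qscale 2 (wi a' b' c' d')" using x qscale_wi[of 2 a' b' c' d'] by simp
    thus "x \<in> qscale 2 ` Ord" by auto
  next
    assume "x \<in> qscale 2 ` Ord"
    then obtain a b c d where "x = qscale 2 (wi a b c d)" by (auto simp: Ord_iff)
    thus "bits x = bz" using qscale_wi[of 2 a b c d] by (simp add: bz_def)
  qed
qed

lemma Ord_add: "x \<in> Ord \<Longrightarrow> y \<in> Ord \<Longrightarrow> qadd x y \<in> Ord"
  by (auto simp: Ord_iff qadd_wi)
lemma Ord_scale: "x \<in> Ord \<Longrightarrow> qscale (of_int k) x \<in> Ord"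
  by (auto simp: Ord_iff qscale_wi)
lemma Ord_sub: "x \<in> Ord \<Longrightarrow> y \<in> Ord \<Longrightarrow> qsub x y \<in> Ord"
  unfolding qsub_def using Ord_add Ord_scale[of y "-1"] by simp

lemma bits_sub: "x \<in> Ord \<Longrightarrow> y \<in> Ord \<Longrightarrow> bits (qsub x y) = axor (bits x) (bits y)"
  unfolding qsub_def using bits_add[OF _ Ord_scale[of y "-1"]] bits_scale[of y "-1"] by simp

lemma qmul_add: "qmul x (qadd y z) = qadd (qmul x y) (qmul x z)" "qmul (qadd y z) x = qadd (qmul y x) (qmul z x)"
  by (cases x rule: quat_wq_cases; cases y rule: quat_wq_cases; cases z rule: quat_wq_cases;
      simp add: wq_mul qadd_wq algebra_simps)+

lemma cj_add: "cj x (qadd u v) = qadd (cj x u) (cj x v)"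
  by (simp add: cj_def qmul_add)
lemma cj_scale: "cj x (qscale r u) = qscale r (cj x u)"
  by (simp add: cj_def qscale_mul)
lemma cj_sub: "cj x (qsub u v) = qsub (cj x u) (cj x v)"
  by (simp add: qsub_def cj_add cj_scale)
lemma cj_qmul: "nrd x \<noteq> 0 \<Longrightarrow> cj x (qmul u v) = qmul (cj x u) (cj x v)"
  by (simp add: cj_def qmul_assoc qinv_cancel)
lemma cj_one: "nrd x \<noteq> 0 \<Longrightarrow> cj x qone = qone"
  by (simp add: cj_def qinv_r)
lemma qinv_scale: "r \<noteq> 0 \<Longrightarrow> nrd x \<noteq> 0 \<Longrightarrow> qinv (qscale r x) = qscale (1/r) (qinv x)"
  by (rule qinv_unique) (simp_all add: qscale_mul qinv_r qinv_l)
lemma cj_scale_left: "r \<noteq> 0 \<Longrightarrow> nrd x \<noteq> 0 \<Longrightarrow> cj (qscale r x) z = cj x z"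
  by (simp add: cj_def qinv_scale qscale_mul)

lemma Nplus_cj_Ord: "x \<in> Nplus \<Longrightarrow> z \<in> Ord \<Longrightarrow> cj x z \<in> Ord"
  by (auto simp: Nplus_iff)

lemma Nplus_cj_2: assumes x: "x \<in> Nplus" and z: "z \<in> Ord" shows "bits (cj x z) = bz \<longleftrightarrow> bits z = bz"
proof
  assume "bits (cj x z) = bz"
  then obtain v where v: "v \<in> Ord" "cj x z = qscale 2 v" using bits_zero_iff[OF Nplus_cj_Ord[OF x z]] by auto
  have "z = cj (qinv x) (cj x z)" using cj_inv Nplus_nrd[OF x] by simp
  also have "\<dots> = qscale 2 (cj (qinv x) v)" using v by (simp add: cj_scale)
  finally have "z \<in> qscale 2 ` Ord" using Nplus_cj_Ord[OF Nplus_inv[OF x] v(1)] by auto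
  thus "bits z = bz" using bits_zero_iff[OF z] by simp
next
  assume "bits z = bz"
  then obtain v where v: "v \<in> Ord" "z = qscale 2 v" using bits_zero_iff[OF z] by auto
  hence "cj x z = qscale 2 (cj x v)" by (simp add: cj_scale)
  thus "bits (cj x z) = bz" using bits_zero_iff[OF Nplus_cj_Ord[OF x z]] Nplus_cj_Ord[OF x v(1)] by auto
qed


definition sc :: "bool \<Rightarrow> bq \<Rightarrow> bq" where "sc k v = (if k then v else bz)"

definition act :: "bq \<Rightarrow> bq \<Rightarrow> bq" where
 "act e y = (case e of (ea, eb, ec, ed) \<Rightarrow> case y of (a, b, c, d) \<Rightarrow>
   if ea then (a, b \<noteq> ((a \<noteq> d) \<and> eb), c \<noteq> ((a \<noteq> d) \<and> ec), d)
   else (d, c \<noteq> ((a \<noteq> d) \<and> eb), b \<noteq> ((a \<noteq> d) \<and> ec), a))"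

lemma finP: "amul (ea, eb, ec, ed) (ea, eb, ec, ed) = (ea, eb, ec, ed) \<Longrightarrow> (ea, eb, ec, ed) \<noteq> bz
  \<Longrightarrow> axor bone (ea, eb, ec, ed) \<noteq> bz \<Longrightarrow> (p1, p2, p3, p4) = amul (amul (ea, eb, ec, ed) (p1, p2, p3, p4)) (axor bone (ea, eb, ec, ed))
  \<Longrightarrow> (p1, p2, p3, p4) \<noteq> bz \<Longrightarrow>
  ea \<noteq> ed \<and> (p1, p2, p3, p4) = (if ea then (False, True, False, False) else (False, False, True, False))"
  by (cases ea; cases eb; cases ec; cases ed; cases p1; cases p2; cases p3; cases p4;
      simp add: amul_def axor_def bz_def bone_def)

lemma finQ: "amul (ea, eb, ec, ed) (ea, eb, ec, ed) = (ea, eb, ec, ed) \<Longrightarrow> (ea, eb, ec, ed) \<noteq> bz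
  \<Longrightarrow> axor bone (ea, eb, ec, ed) \<noteq> bz \<Longrightarrow> (p1, p2, p3, p4) = amul (amul (axor bone (ea, eb, ec, ed)) (p1, p2, p3, p4)) (ea, eb, ec, ed)
  \<Longrightarrow> (p1, p2, p3, p4) \<noteq> bz \<Longrightarrow>
  (p1, p2, p3, p4) = (if ea then (False, False, True, False) else (False, True, False, False))"
  by (cases ea; cases eb; cases ec; cases ed; cases p1; cases p2; cases p3; cases p4;
      simp add: amul_def axor_def bz_def bone_def)

lemma finA: "ea \<noteq> ed \<Longrightarrow>
  axor (sc a (ea, eb, ec, ed)) (axor (sc b (if ea then (False, True, False, False) else (False, False, True, False)))
   (axor (sc c (if ea then (False, False, True, False) else (False, True, False, False))) (sc d (axor bone (ea, eb, ec, ed)))))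
  = act (ea, eb, ec, ed) (a, b, c, d)"
  by (cases ea; cases eb; cases ec; cases ed; cases a; cases b; cases c; cases d;
      simp add: act_def axor_def bz_def bone_def sc_def)


definition alpha :: "quat \<Rightarrow> bq" where "alpha x = bits (cj x w3)"

lemma axor_bz[simp]: "axor v bz = v" by (cases v) (simp add: axor_def bz_def)
lemma bits_two: "u \<in> Ord \<Longrightarrow> bits (qscale 2 u) = bz"
  using bits_scale[of u 2] by simp
lemma bits_one: "bits qone = bone" by (simp add: qone_wi bone_def)

lemma bits4: "u1 \<in> Ord \<Longrightarrow> u2 \<in> Ord \<Longrightarrow> u3 \<in> Ord \<Longrightarrow> u4 \<in> Ord \<Longrightarrow>
  bits (qadd (qscale (of_int k1) u1) (qadd (qscale (of_int k2) u2) (qadd (qscale (of_int k3) u3) (qscale (of_int k4) u4))))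
  = axor (sc (odd k1) (bits u1)) (axor (sc (odd k2) (bits u2)) (axor (sc (odd k3) (bits u3)) (sc (odd k4) (bits u4))))"
  by (simp add: bits_add bits_scale Ord_add Ord_scale sc_def del: of_int_add of_int_diff)

lemma alpha_act:
  assumes x: "x \<in> Nplus" and z: "z \<in> Ord"
  shows "bits (cj x z) = act (alpha x) (bits z)"
    and "\<exists>ea eb ec ed. alpha x = (ea, eb, ec, ed) \<and> ea \<noteq> ed"
proof -
  define Eq where "Eq = wi 0 0 0 1"
  define Nbq where "Nbq = wi 0 0 1 0"
  define Ncq where "Ncq = wi 0 1 1 0"
  define Fq where "Fq = wi 1 0 0 (-1)"
  have O: "Eq \<in> Ord" "Nbq \<in> Ord" "Ncq \<in> Ord" "Fq \<in> Ord" by (simp_all add: Eq_def Nbq_def Ncq_def Fq_def)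
  have n0: "nrd x \<noteq> 0" using Nplus_nrd[OF x] by simp
  have cO: "cj x u \<in> Ord" if "u \<in> Ord" for u using Nplus_cj_Ord[OF x that] .
  obtain ea eb ec ed where al: "alpha x = (ea, eb, ec, ed)" by (cases "alpha x") auto
  have aE: "bits (cj x Eq) = (ea, eb, ec, ed)" using al by (simp add: alpha_def Eq_def w3_wi)
  obtain p1 p2 p3 p4 where P: "bits (cj x Nbq) = (p1, p2, p3, p4)" by (cases "bits (cj x Nbq)") auto
  obtain q1 q2 q3 q4 where Q: "bits (cj x Ncq) = (q1, q2, q3, q4)" by (cases "bits (cj x Ncq)") auto
  have Fsub: "Fq = qsub qone Eq" by (simp add: Fq_def Eq_def qone_wi qsub_def qscale_wi[of "-1", simplified] qadd_wi)
  have cF: "bits (cj x Fq) = axor bone (ea, eb, ec, ed)"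
    using Fsub bits_sub[OF Ord_one cO[OF O(1)]] aE by (simp add: cj_sub cj_one[OF n0] bits_one)
  have EE: "qmul Eq Eq = qadd Eq (qscale 2 (wi (-2) 0 0 0))"
    using qscale_wi[of 2 "-2" 0 0 0] by (simp add: Eq_def wi_mul qadd_wi)
  have idem: "amul (ea, eb, ec, ed) (ea, eb, ec, ed) = (ea, eb, ec, ed)"
  proof -
    have "bits (cj x (qmul Eq Eq)) = amul (ea, eb, ec, ed) (ea, eb, ec, ed)"
      using aE by (simp add: cj_qmul[OF n0] bits_mul[OF cO[OF O(1)] cO[OF O(1)]])
    moreover have "bits (cj x (qmul Eq Eq)) = (ea, eb, ec, ed)"
      unfolding EE cj_add cj_scale using aE bits_add[OF cO[OF O(1)] Ord_scale[OF cO[OF wi_Ord], of 2]]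
        bits_two[OF cO[OF wi_Ord]] by simp
    ultimately show ?thesis by simp
  qed
  have ENF: "qmul (qmul Eq Nbq) Fq = qadd Nbq (qscale 2 (wi 0 (-3) (-3) 0))"
    using qscale_wi[of 2 0 "-3" "-3" 0] by (simp add: Eq_def Nbq_def Fq_def wi_mul qadd_wi)
  have FNE: "qmul (qmul Fq Ncq) Eq = qadd Ncq (qscale 2 (wi 0 0 (-2) 0))"
    using qscale_wi[of 2 0 0 "-2" 0] by (simp add: Eq_def Ncq_def Fq_def wi_mul qadd_wi)
  have Peq: "(p1, p2, p3, p4) = amul (amul (ea, eb, ec, ed) (p1, p2, p3, p4)) (axor bone (ea, eb, ec, ed))"
  proof -
    have "bits (cj x (qmul (qmul Eq Nbq) Fq)) = amul (amul (ea, eb, ec, ed) (p1, p2, p3, p4)) (axor bone (ea, eb, ec, ed))"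
      using aE P cF by (simp add: cj_qmul[OF n0] bits_mul cO O Ord_mul)
    moreover have "bits (cj x (qmul (qmul Eq Nbq) Fq)) = (p1, p2, p3, p4)"
      unfolding ENF cj_add cj_scale using P bits_add[OF cO[OF O(2)] Ord_scale[OF cO[OF wi_Ord], of 2]]
        bits_two[OF cO[OF wi_Ord]] by simp
    ultimately show ?thesis by simp
  qed
  have Qeq: "(q1, q2, q3, q4) = amul (amul (axor bone (ea, eb, ec, ed)) (q1, q2, q3, q4)) (ea, eb, ec, ed)"
  proof -
    have "bits (cj x (qmul (qmul Fq Ncq) Eq)) = amul (amul (axor bone (ea, eb, ec, ed)) (q1, q2, q3, q4)) (ea, eb, ec, ed)"
      using aE Q cF by (simp add: cj_qmul[OF n0] bits_mul cO O Ord_mul)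
    moreover have "bits (cj x (qmul (qmul Fq Ncq) Eq)) = (q1, q2, q3, q4)"
      unfolding FNE cj_add cj_scale using Q bits_add[OF cO[OF O(3)] Ord_scale[OF cO[OF wi_Ord], of 2]]
        bits_two[OF cO[OF wi_Ord]] by simp
    ultimately show ?thesis by simp
  qed
  have nzE: "(ea, eb, ec, ed) \<noteq> bz" using aE Nplus_cj_2[OF x O(1)] by (simp add: Eq_def bz_def)
  have nzF: "axor bone (ea, eb, ec, ed) \<noteq> bz" using cF Nplus_cj_2[OF x O(4)] by (simp add: Fq_def bz_def)
  have nzP: "(p1, p2, p3, p4) \<noteq> bz" using P Nplus_cj_2[OF x O(2)] by (simp add: Nbq_def bz_def)
  have nzQ: "(q1, q2, q3, q4) \<noteq> bz" using Q Nplus_cj_2[OF x O(3)] by (simp add: Ncq_def bz_def)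
  note fp = finP[OF idem nzE nzF Peq nzP]
  note fq = finQ[OF idem nzE nzF Qeq nzQ]
  show "\<exists>ea eb ec ed. alpha x = (ea, eb, ec, ed) \<and> ea \<noteq> ed" using al fp by blast
  obtain n0 n1 n2 n3 where zz: "z = wi n0 n1 n2 n3" using z by (auto simp: Ord_iff)
  have dec: "z = qadd (qscale (of_int (n0 + n3)) Eq) (qadd (qscale (of_int (n2 - n1)) Nbq)
      (qadd (qscale (of_int n1) Ncq) (qscale (of_int n0) Fq)))"
    by (simp add: zz Eq_def Nbq_def Ncq_def Fq_def wi_def qscale_wq qadd_wq algebra_simps)
  have "bits (cj x z) = axor (sc (odd (n0 + n3)) (ea, eb, ec, ed)) (axor (sc (odd (n2 - n1)) (p1, p2, p3, p4))
     (axor (sc (odd n1) (q1, q2, q3, q4)) (sc (odd n0) (axor bone (ea, eb, ec, ed)))))"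
    unfolding dec cj_add cj_scale bits4[OF cO[OF O(1)] cO[OF O(2)] cO[OF O(3)] cO[OF O(4)]]
    by (simp only: aE P Q cF)
  also have "\<dots> = act (ea, eb, ec, ed) (odd (n0 + n3), odd (n2 - n1), odd n1, odd n0)"
    using fp fq finA[of ea ed] by simp
  also have "\<dots> = act (alpha x) (bits z)"
  proof -
    have "(even n2 = odd n1) = (even n1 = odd n2)" by auto
    thus ?thesis using al zz by simp
  qed
  finally show "bits (cj x z) = act (alpha x) (bits z)" .
qed


lemma pr: "Factorial_Ring.prime (2::int)" "Factorial_Ring.prime (3::int)" "Factorial_Ring.prime (5::int)"
  by simp_all

definition vpar :: "int \<Rightarrow> rat \<Rightarrow> int" where
  "vpar p q = (case quotient_of q of (a, b) \<Rightarrow> int (multiplicity p (a * b) mod 2))"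

lemma vpar_frac:
  assumes p: "Factorial_Ring.prime p" and a: "a > 0" and b: "b > 0"
  shows "vpar p (of_int a / of_int b) = int (multiplicity p (a * b) mod 2)"
proof -
  obtain a' b' where q: "quotient_of (of_int a / of_int b) = (a', b')" by fastforce
  have b': "b' > 0" using q quotient_of_denom_pos by blast
  have e: "(of_int a / of_int b :: rat) = of_int a' / of_int b'" using q quotient_of_div by blast
  hence "rat_of_int a * of_int b' = of_int a' * of_int b" using b b' by (simp add: field_simps)
  hence e2: "a * b' = a' * b" by (metis of_int_eq_iff of_int_mult)
  hence "a' > 0" using a b b' by (metis mult_pos_pos zero_less_mult_pos2)
  have pe: "prime_elem p" using p by (rule prime_imp_prime_elem)
  have "(a * b) * (b' * b') = (a * b') * (b * b')" by (simp add: ac_simps)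
  also have "\<dots> = (a' * b) * (b * b')" using e2 by simp
  also have "\<dots> = (a' * b') * (b * b)" by (simp add: ac_simps)
  finally have "(a * b) * (b' * b') = (a' * b') * (b * b)" .
  hence "multiplicity p ((a * b) * (b' * b')) = multiplicity p ((a' * b') * (b * b))" by (simp only:)
  hence "multiplicity p (a * b) + 2 * multiplicity p b' = multiplicity p (a' * b') + 2 * multiplicity p b"
    using a b b' \<open>a' > 0\<close> by (simp add: prime_elem_multiplicity_mult_distrib[OF pe])
  hence "multiplicity p (a * b) mod 2 = multiplicity p (a' * b') mod 2" by presburger
  thus ?thesis using q by (simp add: vpar_def)
qed

lemma vpar_mod: "vpar p q mod 2 = vpar p q"
  by (simp add: vpar_def split: prod.split)
lemma vpar_range: "vpar p q \<in> {0..<2}"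
  by (simp add: vpar_def split: prod.split)

lemma rat_pos_frac: assumes "(q::rat) > 0" obtains a b where "a > 0" "b > 0" "q = of_int a / of_int b"
proof -
  obtain a b where qq: "quotient_of q = (a, b)" by fastforce
  have "b > 0" using qq quotient_of_denom_pos by blast
  moreover have e: "q = of_int a / of_int b" using qq quotient_of_div by blast
  moreover have "a > 0" using assms e \<open>b > 0\<close> by (simp add: zero_less_divide_iff)
  ultimately show ?thesis using that by blast
qed

lemma vpar_mult:
  assumes p: "Factorial_Ring.prime p" and "q1 > 0" "q2 > 0"
  shows "vpar p (q1 * q2) = (vpar p q1 + vpar p q2) mod 2"
proof -
  obtain a1 b1 where 1: "a1 > 0" "b1 > 0" "q1 = of_int a1 / of_int b1" using rat_pos_frac assms(2) by blast
  obtain a2 b2 where 2: "a2 > 0" "b2 > 0" "q2 = of_int a2 / of_int b2" using rat_pos_frac assms(3) by blast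
  have pe: "prime_elem p" using p by (rule prime_imp_prime_elem)
  have "q1 * q2 = of_int (a1 * a2) / of_int (b1 * b2)" using 1 2 by simp
  hence "vpar p (q1 * q2) = int (multiplicity p ((a1 * a2) * (b1 * b2)) mod 2)"
    using vpar_frac[OF p, of "a1 * a2" "b1 * b2"] 1 2 by simp
  also have "(a1 * a2) * (b1 * b2) = (a1 * b1) * (a2 * b2)" by (simp add: ac_simps)
  also have "multiplicity p ((a1 * b1) * (a2 * b2)) = multiplicity p (a1 * b1) + multiplicity p (a2 * b2)"
    using 1 2 by (simp add: prime_elem_multiplicity_mult_distrib[OF pe])
  finally show ?thesis using vpar_frac[OF p 1(1,2)] vpar_frac[OF p 2(1,2)] 1 2 by (simp add: zmod_int add.commute mod_add_eq)
qed

lemma vpar_sq: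
  assumes p: "Factorial_Ring.prime p" and r: "r \<noteq> 0" and q: "q > 0"
  shows "vpar p (r^2 * q) = vpar p q"
proof -
  have r2: "r^2 > 0" using r by simp
  obtain a b where ab: "a > 0" "b > 0" "r^2 = of_int a / of_int b" using rat_pos_frac r2 by blast
  obtain c d where cd: "quotient_of r = (c, d)" by fastforce
  have "d > 0" using cd quotient_of_denom_pos by blast
  have re: "r = of_int c / of_int d" using cd quotient_of_div by blast
  have "c \<noteq> 0" using re r by auto
  have pe: "prime_elem p" using p by (rule prime_imp_prime_elem)
  have re2: "r^2 = of_int (c * c) / of_int (d * d)" using re by (simp add: power2_eq_square)
  have cc: "c * c > 0" using \<open>c \<noteq> 0\<close> by (cases "c > 0") (auto simp: mult_neg_neg)
  have dd: "d * d > 0" using \<open>d > 0\<close> by simp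
  have "vpar p (r^2) = int (multiplicity p ((c * c) * (d * d)) mod 2)"
    unfolding re2 by (rule vpar_frac[OF p cc dd])
  also have "multiplicity p ((c * c) * (d * d)) = 2 * (multiplicity p c + multiplicity p d)"
    using \<open>c \<noteq> 0\<close> \<open>d > 0\<close> by (simp add: prime_elem_multiplicity_mult_distrib[OF pe])
  finally have "vpar p (r^2) = 0" by simp
  thus ?thesis using vpar_mult[OF p r2 q] vpar_mod by simp
qed


lemma mult_sqfree:
  fixes p N :: int
  assumes p: "Factorial_Ring.prime p" and N: "N > 0" "N dvd 30" and p2: "\<not> p^2 dvd 30"
  shows "multiplicity p N = (if p dvd N then 1 else 0)"
proof (cases "p dvd N")
  case True
  then obtain k where k: "N = p * k" by (elim dvdE)
  have "\<not> p dvd k"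
  proof
    assume "p dvd k"
    hence "p^2 dvd N" using k by (simp add: power2_eq_square)
    thus False using p2 N dvd_trans by blast
  qed
  moreover have "k \<noteq> 0" using k N by auto
  moreover have "p \<noteq> 0" "\<not> is_unit p" using p by auto
  ultimately show ?thesis using True k multiplicity_times_same[of k p] not_dvd_imp_multiplicity_0 by simp
next
  case False thus ?thesis by (simp add: not_dvd_imp_multiplicity_0)
qed

lemma vpar_int: "Factorial_Ring.prime p \<Longrightarrow> N > 0 \<Longrightarrow> N dvd 30 \<Longrightarrow> \<not> p^2 dvd 30 \<Longrightarrow>
   vpar p (of_int N) = (if p dvd N then 1 else 0)"
  using vpar_frac[of p N 1] mult_sqfree[of p N] by simp

lemma p2: "\<not> (2::int)^2 dvd 30" "\<not> (3::int)^2 dvd 30" "\<not> (5::int)^2 dvd 30" by simp_all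

lemma N_one: fixes N :: int assumes "N > 0" "N dvd 30" "\<not> 2 dvd N" "\<not> 3 dvd N" "\<not> 5 dvd N" shows "N = 1"
proof -
  have c: "coprime 2 N" "coprime 3 N" "coprime 5 N" using assms pr by (simp_all add: prime_imp_coprime)
  have "coprime (2 * 3 :: int) N" using coprime_mult_left_iff[of "2::int" 3 N] c by blast
  hence "coprime ((2 * 3) * 5 :: int) N" using coprime_mult_left_iff[of "2*3::int" 5 N] c by blast
  hence "coprime N 30" by (simp add: coprime_commute)
  hence "is_unit N" using assms(2) by (meson coprime_common_divisor dvd_refl)
  thus ?thesis using assms(1) by simp
qed

definition nu :: "int \<Rightarrow> quat \<Rightarrow> int" where "nu p x = vpar p (nrd x)"

lemma nu_mul: "Factorial_Ring.prime p \<Longrightarrow> x \<in> Nplus \<Longrightarrow> y \<in> Nplus \<Longrightarrow> nu p (qmul x y) = (nu p x + nu p y) mod 2"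
  by (simp add: nu_def nrd_mul vpar_mult Nplus_nrd)

lemma nu_scale: "Factorial_Ring.prime p \<Longrightarrow> r \<noteq> 0 \<Longrightarrow> x \<in> Nplus \<Longrightarrow> nu p (qscale r x) = nu p x"
  by (simp add: nu_def nrd_scale vpar_sq Nplus_nrd)

lemma nu_struct: assumes "Factorial_Ring.prime p" "\<not> p^2 dvd 30" "g > 0" "x = qscale g (wi n0 n1 n2 n3)"
  "nf n0 n1 n2 n3 > 0" "nf n0 n1 n2 n3 dvd 30"
  shows "nu p x = (if p dvd nf n0 n1 n2 n3 then 1 else 0)"
  using assms by (simp add: nu_def nrd_scale nrd_wi' vpar_sq vpar_int)

lemma nu_range: "nu p x \<in> {0..<2}" using vpar_range[of p "nrd x"] by (simp add: nu_def)

lemma Ord1_Nplus: assumes "x \<in> Ord1" shows "x \<in> Nplus"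
proof -
  have x: "x \<in> Ord" "nrd x = 1" using assms by (auto simp: Ord1_def)
  have qi: "qinv x = qconj x" using x by (simp add: qinv_eq)
  have c1: "cj x z \<in> Ord" if "z \<in> Ord" for z using x that by (simp add: cj_formula Ord_mul Ord_conj)
  have c2: "cj (qinv x) z \<in> Ord" if "z \<in> Ord" for z
    using x that qi by (simp add: cj_formula nrd_conj Ord_mul Ord_conj)
  have "cj x ` Ord = Ord"
  proof
    show "cj x ` Ord \<subseteq> Ord" using c1 by auto
    show "Ord \<subseteq> cj x ` Ord"
    proof
      fix z assume z: "z \<in> Ord"
      have "z = cj x (cj (qinv x) z)" using cj_inv' x by simp
      thus "z \<in> cj x ` Ord" using c2[OF z] by blast
    qed
  qed
  thus ?thesis using x by (simp add: Nplus_iff)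
qed

lemma Nplus_nz: "x \<in> Nplus \<Longrightarrow> nrd x \<noteq> 0" using Nplus_nrd by force

lemma alpha_mul: "x \<in> Nplus \<Longrightarrow> y \<in> Nplus \<Longrightarrow> alpha (qmul x y) = act (alpha x) (alpha y)"
  unfolding alpha_def using alpha_act(1)[of x "cj y w3"] Nplus_cj_Ord[of y w3]
  by (simp add: cj_mul Nplus_nz w3_wi alpha_def)

lemma alpha_scale: "r \<noteq> 0 \<Longrightarrow> x \<in> Nplus \<Longrightarrow> alpha (qscale r x) = alpha x"
  by (simp add: alpha_def cj_scale_left Nplus_nz)

lemma odd_nf: "odd (nf n0 n1 n2 n3) \<Longrightarrow> odd n0 \<and> odd (n0 + n3)"
  by (simp add: nf_def power2_eq_square) presburger

lemma alpha_odd: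
  assumes y: "y \<in> Nplus" "y = wi n0 n1 n2 n3" and o: "odd (nf n0 n1 n2 n3)"
  shows "alpha y = (True, odd (n1 + n2), odd n1, False)"
proof -
  define N where "N = nf n0 n1 n2 n3"
  have Ny: "nrd y = of_int N" using y by (simp add: N_def nrd_wi')
  have N0: "N \<noteq> 0" using o N_def by auto
  define V where "V = qmul (qmul y w3) (qconj y)"
  have VO: "V \<in> Ord" using y by (simp add: V_def Ord_mul Ord_conj w3_wi)
  have c: "cj y w3 = qscale (1 / of_int N) V" using cj_formula[of y w3] Ny N0 by (simp add: V_def)
  have cO: "cj y w3 \<in> Ord" using Nplus_cj_Ord[OF y(1)] by (simp add: w3_wi)
  have "V = qscale (of_int N) (cj y w3)" using c N0 by simp
  hence "bits V = alpha y" using bits_scale[OF cO, of N] o N_def by (simp add: alpha_def)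
  moreover have "bits V = (True, odd (n1 + n2), odd n1, False)"
    using odd_nf[OF o] y(2)
    by (simp add: V_def bits_mul Ord_mul Ord_conj w3_wi bits_conj amul_def) auto
  ultimately show ?thesis by simp
qed


lemma qscale_wi_div': "N \<noteq> 0 \<Longrightarrow> qscale (1 / rat_of_int N) (wi (N * L0) (N * L1) (N * L2) (N * L3)) = wi L0 L1 L2 L3"
  by (simp add: wi_def qscale_wq)

lemma qscale_wi_div: "N \<noteq> 0 \<Longrightarrow> P0 = N * L0 \<Longrightarrow> P1 = N * L1 \<Longrightarrow> P2 = N * L2 \<Longrightarrow> P3 = N * L3 \<Longrightarrow>
  qscale (1 / of_int N) (wi P0 P1 P2 P3) = wi L0 L1 L2 L3"
  by (simp add: wi_def qscale_wq)

lemma Nplus_intro: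
  assumes "nrd x > 0" "\<And>z. z \<in> Ord \<Longrightarrow> cj x z \<in> Ord" "\<And>z. z \<in> Ord \<Longrightarrow> cj (qconj x) z \<in> Ord"
  shows "x \<in> Nplus"
proof -
  have n: "nrd x \<noteq> 0" using assms(1) by simp
  have ci: "cj (qinv x) z = cj (qconj x) z" for z
    using n by (simp add: qinv_eq cj_scale_left nrd_conj)
  have "cj x ` Ord = Ord"
  proof
    show "cj x ` Ord \<subseteq> Ord" using assms(2) by auto
    show "Ord \<subseteq> cj x ` Ord"
    proof
      fix z assume z: "z \<in> Ord"
      have "z = cj x (cj (qinv x) z)" using cj_inv' n by simp
      thus "z \<in> cj x ` Ord" using assms(3)[OF z] ci by auto
    qed
  qed
  thus ?thesis using assms(1) by (simp add: Nplus_iff)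
qed

definition wA :: quat where "wA = wi 2 1 0 0"
definition a3 :: quat where "a3 = wi 5 0 2 2"
definition a15 :: quat where "a15 = wi 1 0 0 (-2)"
definition gb :: quat where "gb = wi 3 2 1 0"
definition gc :: quat where "gc = wi 3 1 1 0"

lemma cj_wA: "cj wA (wi n0 n1 n2 n3) = wi (n0 + 2 * n2 - n3) (n1 + 3 * n2 - 3 * n3) (3 * n2 - 2 * n3) (- 4 * n2 + 3 * n3)"
proof -
  have e1: "qmul (qmul wA (wi n0 n1 n2 n3)) (qconj wA) = wi (2 * (n0 + 2 * n2 - n3)) (2 * (n1 + 3 * n2 - 3 * n3)) (2 * (3 * n2 - 2 * n3)) (2 * (- 4 * n2 + 3 * n3))"
    by (simp add: wA_def conj_wi wi_mul algebra_simps)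
  have e2: "nrd wA = rat_of_int 2" by (simp add: wA_def nrd_wi' nf_def conj_wi nrd_conj)
  have "cj wA (wi n0 n1 n2 n3) = qscale (1 / nrd wA) (qmul (qmul wA (wi n0 n1 n2 n3)) (qconj wA))"
    by (rule cj_formula) (simp add: e2)
  also have "\<dots> = qscale (1 / rat_of_int 2) (wi (2 * (n0 + 2 * n2 - n3)) (2 * (n1 + 3 * n2 - 3 * n3)) (2 * (3 * n2 - 2 * n3)) (2 * (- 4 * n2 + 3 * n3)))" by (simp only: e1 e2)
  also have "\<dots> = wi (n0 + 2 * n2 - n3) (n1 + 3 * n2 - 3 * n3) (3 * n2 - 2 * n3) (- 4 * n2 + 3 * n3)" by (rule qscale_wi_div') simp
  finally show ?thesis .
qed

lemma cj_wA': "cj (qconj wA) (wi n0 n1 n2 n3) = wi (n0 - 2 * n2 - n3) (n1 + 3 * n2 + 3 * n3) (3 * n2 + 2 * n3) (4 * n2 + 3 * n3)"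
proof -
  have e1: "qmul (qmul (qconj wA) (wi n0 n1 n2 n3)) (qconj (qconj wA)) = wi (2 * (n0 - 2 * n2 - n3)) (2 * (n1 + 3 * n2 + 3 * n3)) (2 * (3 * n2 + 2 * n3)) (2 * (4 * n2 + 3 * n3))"
    by (simp add: wA_def conj_wi wi_mul algebra_simps)
  have e2: "nrd (qconj wA) = rat_of_int 2" by (simp add: wA_def nrd_wi' nf_def conj_wi nrd_conj)
  have "cj (qconj wA) (wi n0 n1 n2 n3) = qscale (1 / nrd (qconj wA)) (qmul (qmul (qconj wA) (wi n0 n1 n2 n3)) (qconj (qconj wA)))"
    by (rule cj_formula) (simp add: e2)
  also have "\<dots> = qscale (1 / rat_of_int 2) (wi (2 * (n0 - 2 * n2 - n3)) (2 * (n1 + 3 * n2 + 3 * n3)) (2 * (3 * n2 + 2 * n3)) (2 * (4 * n2 + 3 * n3)))" by (simp only: e1 e2)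
  also have "\<dots> = wi (n0 - 2 * n2 - n3) (n1 + 3 * n2 + 3 * n3) (3 * n2 + 2 * n3) (4 * n2 + 3 * n3)" by (rule qscale_wi_div') simp
  finally show ?thesis .
qed

lemma cj_a3: "cj a3 (wi n0 n1 n2 n3) = wi (n0 - 12 * n1 + 16 * n2 - 16 * n3) (35 * n1 - 48 * n2 + 48 * n3) (16 * n1 - 21 * n2 + 22 * n3) (24 * n1 - 32 * n2 + 33 * n3)"
proof -
  have e1: "qmul (qmul a3 (wi n0 n1 n2 n3)) (qconj a3) = wi (3 * (n0 - 12 * n1 + 16 * n2 - 16 * n3)) (3 * (35 * n1 - 48 * n2 + 48 * n3)) (3 * (16 * n1 - 21 * n2 + 22 * n3)) (3 * (24 * n1 - 32 * n2 + 33 * n3))"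
    by (simp add: a3_def conj_wi wi_mul algebra_simps)
  have e2: "nrd a3 = rat_of_int 3" by (simp add: a3_def nrd_wi' nf_def conj_wi nrd_conj)
  have "cj a3 (wi n0 n1 n2 n3) = qscale (1 / nrd a3) (qmul (qmul a3 (wi n0 n1 n2 n3)) (qconj a3))"
    by (rule cj_formula) (simp add: e2)
  also have "\<dots> = qscale (1 / rat_of_int 3) (wi (3 * (n0 - 12 * n1 + 16 * n2 - 16 * n3)) (3 * (35 * n1 - 48 * n2 + 48 * n3)) (3 * (16 * n1 - 21 * n2 + 22 * n3)) (3 * (24 * n1 - 32 * n2 + 33 * n3)))" by (simp only: e1 e2)
  also have "\<dots> = wi (n0 - 12 * n1 + 16 * n2 - 16 * n3) (35 * n1 - 48 * n2 + 48 * n3) (16 * n1 - 21 * n2 + 22 * n3) (24 * n1 - 32 * n2 + 33 * n3)" by (rule qscale_wi_div') simp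
  finally show ?thesis .
qed

lemma cj_a3': "cj (qconj a3) (wi n0 n1 n2 n3) = wi (n0 + 4 * n1 + 16 * n2 - 16 * n3) (11 * n1 + 48 * n2 - 48 * n3) (3 * n2 - 2 * n3) (- 8 * n1 - 32 * n2 + 33 * n3)"
proof -
  have e1: "qmul (qmul (qconj a3) (wi n0 n1 n2 n3)) (qconj (qconj a3)) = wi (3 * (n0 + 4 * n1 + 16 * n2 - 16 * n3)) (3 * (11 * n1 + 48 * n2 - 48 * n3)) (3 * (3 * n2 - 2 * n3)) (3 * (- 8 * n1 - 32 * n2 + 33 * n3))"
    by (simp add: a3_def conj_wi wi_mul algebra_simps)
  have e2: "nrd (qconj a3) = rat_of_int 3" by (simp add: a3_def nrd_wi' nf_def conj_wi nrd_conj)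
  have "cj (qconj a3) (wi n0 n1 n2 n3) = qscale (1 / nrd (qconj a3)) (qmul (qmul (qconj a3) (wi n0 n1 n2 n3)) (qconj (qconj a3)))"
    by (rule cj_formula) (simp add: e2)
  also have "\<dots> = qscale (1 / rat_of_int 3) (wi (3 * (n0 + 4 * n1 + 16 * n2 - 16 * n3)) (3 * (11 * n1 + 48 * n2 - 48 * n3)) (3 * (3 * n2 - 2 * n3)) (3 * (- 8 * n1 - 32 * n2 + 33 * n3)))" by (simp only: e1 e2)
  also have "\<dots> = wi (n0 + 4 * n1 + 16 * n2 - 16 * n3) (11 * n1 + 48 * n2 - 48 * n3) (3 * n2 - 2 * n3) (- 8 * n1 - 32 * n2 + 33 * n3)" by (rule qscale_wi_div') simp
  finally show ?thesis .
qed

lemma cj_a15: "cj a15 (wi n0 n1 n2 n3) = wi (n0) (- n1) (- n2) (n3)"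
proof -
  have e1: "qmul (qmul a15 (wi n0 n1 n2 n3)) (qconj a15) = wi (15 * (n0)) (15 * (- n1)) (15 * (- n2)) (15 * (n3))"
    by (simp add: a15_def conj_wi wi_mul algebra_simps)
  have e2: "nrd a15 = rat_of_int 15" by (simp add: a15_def nrd_wi' nf_def conj_wi nrd_conj)
  have "cj a15 (wi n0 n1 n2 n3) = qscale (1 / nrd a15) (qmul (qmul a15 (wi n0 n1 n2 n3)) (qconj a15))"
    by (rule cj_formula) (simp add: e2)
  also have "\<dots> = qscale (1 / rat_of_int 15) (wi (15 * (n0)) (15 * (- n1)) (15 * (- n2)) (15 * (n3)))" by (simp only: e1 e2)
  also have "\<dots> = wi (n0) (- n1) (- n2) (n3)" by (rule qscale_wi_div') simp
  finally show ?thesis .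
qed

lemma cj_a15': "cj (qconj a15) (wi n0 n1 n2 n3) = wi (n0) (- n1) (- n2) (n3)"
proof -
  have e1: "qmul (qmul (qconj a15) (wi n0 n1 n2 n3)) (qconj (qconj a15)) = wi (15 * (n0)) (15 * (- n1)) (15 * (- n2)) (15 * (n3))"
    by (simp add: a15_def conj_wi wi_mul algebra_simps)
  have e2: "nrd (qconj a15) = rat_of_int 15" by (simp add: a15_def nrd_wi' nf_def conj_wi nrd_conj)
  have "cj (qconj a15) (wi n0 n1 n2 n3) = qscale (1 / nrd (qconj a15)) (qmul (qmul (qconj a15) (wi n0 n1 n2 n3)) (qconj (qconj a15)))"
    by (rule cj_formula) (simp add: e2)
  also have "\<dots> = qscale (1 / rat_of_int 15) (wi (15 * (n0)) (15 * (- n1)) (15 * (- n2)) (15 * (n3)))" by (simp only: e1 e2)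
  also have "\<dots> = wi (n0) (- n1) (- n2) (n3)" by (rule qscale_wi_div') simp
  finally show ?thesis .
qed


lemma D8_group: "group D8"
proof (rule groupI)
  fix x y assume "x \<in> carrier D8" "y \<in> carrier D8"
  thus "x \<otimes>\<^bsub>D8\<^esub> y \<in> carrier D8" by (auto simp: D8_def split: prod.split)
next
  show "\<one>\<^bsub>D8\<^esub> \<in> carrier D8" by (simp add: D8_def)
next
  fix x y z assume "x \<in> carrier D8" "y \<in> carrier D8" "z \<in> carrier D8"
  thus "x \<otimes>\<^bsub>D8\<^esub> y \<otimes>\<^bsub>D8\<^esub> z = x \<otimes>\<^bsub>D8\<^esub> (y \<otimes>\<^bsub>D8\<^esub> z)"
  proof -
    obtain a s where x0: "x = (a, s)" "0 \<le> s" "s < 2" using \<open>x \<in> carrier D8\<close> by (cases x) (auto simp: D8_def)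
    have x: "x = (a, s)" "s = 0 \<or> s = 1" using x0 by arith+
    obtain b t where y0: "y = (b, t)" "0 \<le> t" "t < 2" using \<open>y \<in> carrier D8\<close> by (cases y) (auto simp: D8_def)
    have y: "y = (b, t)" "t = 0 \<or> t = 1" using y0 by arith+
    obtain c u where z0: "z = (c, u)" "0 \<le> u" "u < 2" using \<open>z \<in> carrier D8\<close> by (cases z) (auto simp: D8_def)
    have z: "z = (c, u)" "u = 0 \<or> u = 1" using z0 by arith+
    show ?thesis using x y z
      by (auto simp: D8_def mod_simps algebra_simps)
  qed
next
  fix x assume "x \<in> carrier D8"
  thus "\<one>\<^bsub>D8\<^esub> \<otimes>\<^bsub>D8\<^esub> x = x" by (cases x) (auto simp: D8_def)
next
  fix x assume "x \<in> carrier D8"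
  then obtain a s where x: "x = (a, s)" "0 \<le> a" "a < 4" "0 \<le> s" "s < 2" by (cases x) (auto simp: D8_def)
  show "\<exists>y\<in>carrier D8. y \<otimes>\<^bsub>D8\<^esub> x = \<one>\<^bsub>D8\<^esub>"
  proof (cases "s = 0")
    case True
    have "((- a) mod 4, 0) \<in> carrier D8 \<and> ((- a) mod 4, 0) \<otimes>\<^bsub>D8\<^esub> x = \<one>\<^bsub>D8\<^esub>"
      using x True by (simp add: D8_def mod_simps)
    thus ?thesis by blast
  next
    case False
    hence "s = 1" using x by auto
    have "(a, 1) \<in> carrier D8 \<and> (a, 1) \<otimes>\<^bsub>D8\<^esub> x = \<one>\<^bsub>D8\<^esub>"
      using x \<open>s = 1\<close> by (simp add: D8_def)
    thus ?thesis by blast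
  qed
qed


definition code :: "bq \<Rightarrow> int \<times> int" where
  "code e = (case e of (ea, eb, ec, ed) \<Rightarrow>
     if \<not> ed \<and> \<not> eb \<and> \<not> ec then (0, 0) else if ed \<and> eb \<and> \<not> ec then (1, 0)
     else if \<not> ed \<and> eb \<and> ec then (2, 0) else if ed \<and> \<not> eb \<and> ec then (3, 0)
     else if \<not> ed \<and> eb \<and> \<not> ec then (0, 1) else if ed \<and> eb \<and> ec then (1, 1)
     else if \<not> ed \<and> \<not> eb \<and> ec then (2, 1) else (3, 1))"

lemma code_carrier: "code e \<in> carrier D8"
  by (cases e) (auto simp: code_def D8_def)

lemma code_hom: "ea \<noteq> ed \<Longrightarrow> fa \<noteq> fd \<Longrightarrow>
  code (act (ea, eb, ec, ed) (fa, fb, fc, fd)) = code (ea, eb, ec, ed) \<otimes>\<^bsub>D8\<^esub> code (fa, fb, fc, fd)"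
  by (cases ea; cases eb; cases ec; cases fa; cases fb; cases fc; simp add: code_def act_def D8_def)

lemma code_one: "ea \<noteq> ed \<Longrightarrow> code (ea, eb, ec, ed) = (0, 0) \<longleftrightarrow> (ea, eb, ec, ed) = (True, False, False, False)"
  by (cases ea; cases eb; cases ec; simp add: code_def)

lemma Nplus_wi_intro:
  assumes "nf n0 n1 n2 n3 > 0"
    and "\<And>m0 m1 m2 m3. cj (wi n0 n1 n2 n3) (wi m0 m1 m2 m3) \<in> Ord"
    and "\<And>m0 m1 m2 m3. cj (qconj (wi n0 n1 n2 n3)) (wi m0 m1 m2 m3) \<in> Ord"
  shows "wi n0 n1 n2 n3 \<in> Nplus"
  by (rule Nplus_intro) (use assms in \<open>auto simp: nrd_wi' Ord_iff\<close>)

lemma wA_N: "wA \<in> Nplus" unfolding wA_def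
  by (rule Nplus_wi_intro) (simp_all add: nf_def cj_wA[unfolded wA_def] cj_wA'[unfolded wA_def])
lemma a3_N: "a3 \<in> Nplus" unfolding a3_def
  by (rule Nplus_wi_intro) (simp_all add: nf_def cj_a3[unfolded a3_def] cj_a3'[unfolded a3_def])
lemma a15_N: "a15 \<in> Nplus" unfolding a15_def
  by (rule Nplus_wi_intro) (simp_all add: nf_def cj_a15[unfolded a15_def] cj_a15'[unfolded a15_def])
lemma gb_O1: "gb \<in> Ord1" by (simp add: gb_def Ord1_def nrd_wi' nf_def)
lemma gc_O1: "gc \<in> Ord1" by (simp add: gc_def Ord1_def nrd_wi' nf_def)
lemma gb_N: "gb \<in> Nplus" by (rule Ord1_Nplus[OF gb_O1])
lemma gc_N: "gc \<in> Nplus" by (rule Ord1_Nplus[OF gc_O1])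

lemma alpha_wA: "alpha wA = (False, True, True, True)" by (simp add: alpha_def w3_wi cj_wA)
lemma alpha_a3: "alpha a3 = (True, False, False, False)" by (simp add: alpha_def w3_wi cj_a3)
lemma alpha_a15: "alpha a15 = (True, False, False, False)" by (simp add: alpha_def w3_wi cj_a15)
lemma alpha_gb: "alpha gb = (True, True, False, False)"
  using alpha_odd[OF gb_N gb_def] by (simp add: nf_def)
lemma alpha_gc: "alpha gc = (True, False, True, False)"
  using alpha_odd[OF gc_N gc_def] by (simp add: nf_def)

lemma nu_wi: assumes "Factorial_Ring.prime p" "\<not> p^2 dvd 30" "nf n0 n1 n2 n3 > 0" "nf n0 n1 n2 n3 dvd 30"
  shows "nu p (wi n0 n1 n2 n3) = (if p dvd nf n0 n1 n2 n3 then 1 else 0)"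
  using nu_struct[OF assms(1,2), of 1 "wi n0 n1 n2 n3"] assms(3,4) by simp

lemma nu_vals:
  "nu 2 wA = 1" "nu 3 wA = 0" "nu 5 wA = 0"
  "nu 2 a3 = 0" "nu 3 a3 = 1" "nu 5 a3 = 0"
  "nu 2 a15 = 0" "nu 3 a15 = 1" "nu 5 a15 = 1"
  "nu 2 gb = 0" "nu 3 gb = 0" "nu 5 gb = 0"
  "nu 2 gc = 0" "nu 3 gc = 0" "nu 5 gc = 0"
  "nu 2 qone = 0" "nu 3 qone = 0" "nu 5 qone = 0"
  by (simp_all add: wA_def a3_def a15_def gb_def gc_def qone_wi nu_wi pr p2 nf_def)


lemma C2_simps: "carrier C2 = {0..<2}" "x \<otimes>\<^bsub>C2\<^esub> y = (x + y) mod 2" "\<one>\<^bsub>C2\<^esub> = 0"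
  by (simp_all add: C2_def carrier_integer_mod_group)
lemma C2_group: "group C2" by (simp add: C2_def)
lemma D8_simps: "\<one>\<^bsub>D8\<^esub> = (0, 0)" by (simp add: D8_def)
lemma Np_simps: "carrier Nplus_group = Nplus" "x \<otimes>\<^bsub>Nplus_group\<^esub> y = qmul x y" "\<one>\<^bsub>Nplus_group\<^esub> = qone"
  by (simp_all add: Nplus_group_def)

lemma coset_Qstar: "x \<in> Qstar #>\<^bsub>Nplus_group\<^esub> s \<longleftrightarrow> (\<exists>r. r \<noteq> 0 \<and> x = qscale r s)"
  by (auto simp: r_coset_def Qstar_def Nplus_group_def qmul_qof)

lemma alpha_ex: "x \<in> Nplus \<Longrightarrow> \<exists>ea eb ec ed. alpha x = (ea, eb, ec, ed) \<and> ea \<noteq> ed"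
  using alpha_act(2)[of x qone] by simp

lemma nu01: "nu p x = 0 \<or> nu p x = 1" using nu_range[of p x] by auto

lemma qone_N: "qone \<in> Nplus" by (rule Nplus_one)

lemma A1: assumes x: "x \<in> Nplus" and n: "nu 2 x = 0" shows "fst (alpha x)"
proof -
  obtain g n0 n1 n2 n3 where s: "g > 0" "x = qscale g (wi n0 n1 n2 n3)" "nf n0 n1 n2 n3 > 0" "nf n0 n1 n2 n3 dvd 30"
    by (rule Nplus_struct[OF x])
  have "nu 2 x = (if 2 dvd nf n0 n1 n2 n3 then 1 else 0)" by (rule nu_struct[OF pr(1) p2(1) s])
  hence o: "odd (nf n0 n1 n2 n3)" using n by (auto split: if_splits)
  have y: "wi n0 n1 n2 n3 \<in> Nplus" using Nplus_scale[OF x, of "1/g"] s(1,2) by simp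
  have "alpha x = alpha (wi n0 n1 n2 n3)" using s(1,2) alpha_scale[OF _ y, of g] by simp
  thus ?thesis using alpha_odd[OF y refl o] by simp
qed

lemma nu_qinv: assumes "Factorial_Ring.prime p" "x \<in> Nplus" shows "nu p (qinv x) = nu p x"
proof -
  have "nu p (qmul x (qinv x)) = (nu p x + nu p (qinv x)) mod 2" by (rule nu_mul[OF assms Nplus_inv[OF assms(2)]])
  moreover have "qmul x (qinv x) = qone" using qinv_r Nplus_nz[OF assms(2)] by simp
  moreover have "nu p qone = 0" by (simp add: nu_def qone_def nrd_qof vpar_def)
  ultimately have "(nu p x + nu p (qinv x)) mod 2 = 0" by simp
  thus ?thesis using nu01[of p x] nu01[of p "qinv x"] by auto
qed

lemma A2: assumes x: "x \<in> Nplus" and n: "nu 2 x = 1" shows "\<not> fst (alpha x)"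
proof -
  define z where "z = qmul x (qinv wA)"
  have iw: "qinv wA \<in> Nplus" by (rule Nplus_inv[OF wA_N])
  have z: "z \<in> Nplus" unfolding z_def by (rule Nplus_mul[OF x iw])
  have "nu 2 z = (nu 2 x + nu 2 (qinv wA)) mod 2" unfolding z_def by (rule nu_mul[OF pr(1) x iw])
  also have "\<dots> = 0" using n nu_qinv[OF pr(1) wA_N] nu_vals by simp
  finally have fz: "fst (alpha z)" by (rule A1[OF z])
  have "x = qmul z wA" unfolding z_def using Nplus_nz[OF wA_N] by (simp add: qmul_assoc qinv_l)
  hence "alpha x = act (alpha z) (alpha wA)" using alpha_mul[OF z wA_N] by simp
  thus ?thesis using fz alpha_wA by (cases "alpha z") (simp add: act_def)
qed

lemma alpha_fst: "x \<in> Nplus \<Longrightarrow> fst (alpha x) \<longleftrightarrow> nu 2 x = 0"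
  using A1 A2 nu01 by blast

lemma Ord1_wi: assumes "s \<in> Ord1" obtains n0 n1 n2 n3 where "s = wi n0 n1 n2 n3" "nf n0 n1 n2 n3 = 1"
proof -
  obtain n0 n1 n2 n3 where s: "s = wi n0 n1 n2 n3" using assms by (auto simp: Ord1_def Ord_iff)
  hence "nf n0 n1 n2 n3 = 1" using assms by (simp add: Ord1_def nrd_wi')
  thus ?thesis using that s by blast
qed

lemma Ord1_2_iff: assumes "s \<in> Ord1" shows "s \<in> Ord1_2 \<longleftrightarrow> bits s = bone"
proof -
  have sO: "s \<in> Ord" using assms by (simp add: Ord1_def)
  have "s \<in> Ord1_2 \<longleftrightarrow> bits (qsub s qone) = bz"
    using assms bits_zero_iff[OF Ord_sub[OF sO Ord_one]] by (simp add: Ord1_2_def)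
  also have "\<dots> \<longleftrightarrow> axor (bits s) bone = bz" using bits_sub[OF sO Ord_one] bits_one by simp
  also have "\<dots> \<longleftrightarrow> bits s = bone" by (cases "bits s") (auto simp: axor_def bz_def bone_def)
  finally show ?thesis .
qed

lemma alpha_Ord1: assumes "s \<in> Ord1" shows "alpha s = (True, False, False, False) \<longleftrightarrow> bits s = bone"
proof -
  obtain n0 n1 n2 n3 where s: "s = wi n0 n1 n2 n3" "nf n0 n1 n2 n3 = 1" by (rule Ord1_wi[OF assms])
  have o: "odd (nf n0 n1 n2 n3)" using s by simp
  have "alpha s = (True, odd (n1 + n2), odd n1, False)" by (rule alpha_odd[OF Ord1_Nplus[OF assms] s(1) o])
  thus ?thesis using odd_nf[OF o] s by (auto simp: bone_def)
qed

lemma nu_Ord1: assumes "Factorial_Ring.prime p" "\<not> p^2 dvd 30" "s \<in> Ord1" shows "nu p s = 0"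
proof -
  obtain n0 n1 n2 n3 where s: "s = wi n0 n1 n2 n3" "nf n0 n1 n2 n3 = 1" by (rule Ord1_wi[OF assms(3)])
  have "\<not> p dvd 1" using assms(1) not_prime_unit by blast
  thus ?thesis using nu_wi[OF assms(1,2), of n0 n1 n2 n3] s by simp
qed


lemma nu_bounds: "0 \<le> nu p x" "nu p x < 2" using nu_range[of p x] by auto

definition Psi1 :: "quat \<Rightarrow> (int \<times> int) \<times> int \<times> int" where
  "Psi1 x = (code (alpha x), (nu 3 x, nu 5 x))"

lemma Psi1_mul: assumes "x \<in> Nplus" "y \<in> Nplus"
  shows "Psi1 (qmul x y) = Psi1 x \<otimes>\<^bsub>D8 \<times>\<times> C2 \<times>\<times> C2\<^esub> Psi1 y"
proof -
  obtain ea eb ec ed where a: "alpha x = (ea, eb, ec, ed)" "ea \<noteq> ed" using alpha_ex[OF assms(1)] by blast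
  obtain fa fb fc fd where b: "alpha y = (fa, fb, fc, fd)" "fa \<noteq> fd" using alpha_ex[OF assms(2)] by blast
  have "code (alpha (qmul x y)) = code (alpha x) \<otimes>\<^bsub>D8\<^esub> code (alpha y)"
    using alpha_mul[OF assms] a b code_hom by simp
  thus ?thesis using nu_mul[OF pr(2) assms] nu_mul[OF pr(3) assms] by (simp add: Psi1_def C2_simps)
qed

lemma Psi1_hom: "Psi1 \<in> hom Nplus_group (D8 \<times>\<times> C2 \<times>\<times> C2)"
  by (rule homI) (auto simp: Np_simps Psi1_def code_carrier C2_simps nu_bounds Psi1_mul[unfolded Psi1_def])

lemma Psi1_scale: "r \<noteq> 0 \<Longrightarrow> x \<in> Nplus \<Longrightarrow> Psi1 (qscale r x) = Psi1 x"
  by (simp add: Psi1_def alpha_scale nu_scale pr)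

lemma alpha_qone: "alpha qone = (True, False, False, False)"
proof -
  have "cj qone z = z" for z using qinv_unique[of qone qone] by (simp add: cj_def)
  thus ?thesis by (simp add: alpha_def w3_wi)
qed

lemma Psi1_one: "Psi1 qone = ((0, 0), (0, 0))"
  by (simp add: Psi1_def alpha_qone code_def nu_vals)

lemma Psi1_ker: assumes x: "x \<in> Nplus"
  shows "Psi1 x = \<one>\<^bsub>D8 \<times>\<times> C2 \<times>\<times> C2\<^esub> \<longleftrightarrow> (\<exists>s\<in>Ord1_2. x \<in> Qstar #>\<^bsub>Nplus_group\<^esub> s)"
proof
  assume h: "Psi1 x = \<one>\<^bsub>D8 \<times>\<times> C2 \<times>\<times> C2\<^esub>"
  obtain ea eb ec ed where a: "alpha x = (ea, eb, ec, ed)" "ea \<noteq> ed" using alpha_ex[OF x] by blast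
  have c0: "code (alpha x) = (0, 0)" and n3: "nu 3 x = 0" and n5: "nu 5 x = 0"
    using h by (simp_all add: Psi1_def D8_simps C2_simps)
  have ax: "alpha x = (True, False, False, False)" using c0 a code_one by simp
  hence n2: "nu 2 x = 0" using alpha_fst[OF x] by simp
  obtain g n0 n1 n2 n3 where s: "g > 0" "x = qscale g (wi n0 n1 n2 n3)" "nf n0 n1 n2 n3 > 0" "nf n0 n1 n2 n3 dvd 30"
    by (rule Nplus_struct[OF x])
  have "\<not> 2 dvd nf n0 n1 n2 n3" using nu_struct[OF pr(1) p2(1) s] n2 by (auto split: if_splits)
  moreover have "\<not> 3 dvd nf n0 n1 n2 n3" using nu_struct[OF pr(2) p2(2) s] n3 by (auto split: if_splits)
  moreover have "\<not> 5 dvd nf n0 n1 n2 n3" using nu_struct[OF pr(3) p2(3) s] n5 by (auto split: if_splits)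
  ultimately have N1: "nf n0 n1 n2 n3 = 1" using N_one s(3,4) by blast
  define y where "y = wi n0 n1 n2 n3"
  have yO: "y \<in> Ord1" using N1 by (simp add: y_def Ord1_def nrd_wi')
  have "alpha y = alpha x" using s(1,2) alpha_scale[OF _ Ord1_Nplus[OF yO], of g] by (simp add: y_def)
  hence "bits y = bone" using alpha_Ord1[OF yO] ax by simp
  hence "y \<in> Ord1_2" using Ord1_2_iff[OF yO] by simp
  moreover have "x \<in> Qstar #>\<^bsub>Nplus_group\<^esub> y" using s(1,2) unfolding coset_Qstar y_def by (intro exI[of _ g]) simp
  ultimately show "\<exists>s\<in>Ord1_2. x \<in> Qstar #>\<^bsub>Nplus_group\<^esub> s" by blast
next
  assume "\<exists>s\<in>Ord1_2. x \<in> Qstar #>\<^bsub>Nplus_group\<^esub> s"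
  then obtain s r where s: "s \<in> Ord1_2" "r \<noteq> 0" "x = qscale r s" by (auto simp: coset_Qstar)
  have sO: "s \<in> Ord1" using s(1) by (simp add: Ord1_2_def)
  have "Psi1 x = Psi1 s" using s Psi1_scale Ord1_Nplus[OF sO] by simp
  also have "alpha s = (True, False, False, False)" using alpha_Ord1[OF sO] Ord1_2_iff[OF sO] s(1) by simp
  hence "Psi1 s = ((0, 0), (0, 0))"
    using nu_Ord1[OF pr(2) p2(2) sO] nu_Ord1[OF pr(3) p2(3) sO] by (simp add: Psi1_def code_def)
  finally show "Psi1 x = \<one>\<^bsub>D8 \<times>\<times> C2 \<times>\<times> C2\<^esub>" by (simp add: D8_simps C2_simps)
qed

definition Psi2 :: "quat \<Rightarrow> int \<times> int \<times> int" where
  "Psi2 x = (nu 2 x, (nu 3 x, nu 5 x))"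

lemma Psi2_hom: "Psi2 \<in> hom Nplus_group (C2 \<times>\<times> C2 \<times>\<times> C2)"
  by (rule homI) (auto simp: Np_simps Psi2_def C2_simps nu_bounds nu_mul pr)

lemma Psi2_scale: "r \<noteq> 0 \<Longrightarrow> x \<in> Nplus \<Longrightarrow> Psi2 (qscale r x) = Psi2 x"
  by (simp add: Psi2_def nu_scale pr)

lemma Psi2_ker: assumes x: "x \<in> Nplus"
  shows "Psi2 x = \<one>\<^bsub>C2 \<times>\<times> C2 \<times>\<times> C2\<^esub> \<longleftrightarrow> (\<exists>s\<in>Ord1. x \<in> Qstar #>\<^bsub>Nplus_group\<^esub> s)"
proof
  assume h: "Psi2 x = \<one>\<^bsub>C2 \<times>\<times> C2 \<times>\<times> C2\<^esub>"
  have n2: "nu 2 x = 0" and n3: "nu 3 x = 0" and n5: "nu 5 x = 0"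
    using h by (simp_all add: Psi2_def C2_simps)
  obtain g n0 n1 n2 n3 where s: "g > 0" "x = qscale g (wi n0 n1 n2 n3)" "nf n0 n1 n2 n3 > 0" "nf n0 n1 n2 n3 dvd 30"
    by (rule Nplus_struct[OF x])
  have "\<not> 2 dvd nf n0 n1 n2 n3" using nu_struct[OF pr(1) p2(1) s] n2 by (auto split: if_splits)
  moreover have "\<not> 3 dvd nf n0 n1 n2 n3" using nu_struct[OF pr(2) p2(2) s] n3 by (auto split: if_splits)
  moreover have "\<not> 5 dvd nf n0 n1 n2 n3" using nu_struct[OF pr(3) p2(3) s] n5 by (auto split: if_splits)
  ultimately have N1: "nf n0 n1 n2 n3 = 1" using N_one s(3,4) by blast
  define y where "y = wi n0 n1 n2 n3"
  have yO: "y \<in> Ord1" using N1 by (simp add: y_def Ord1_def nrd_wi')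
  moreover have "x \<in> Qstar #>\<^bsub>Nplus_group\<^esub> y" using s(1,2) unfolding coset_Qstar y_def by (intro exI[of _ g]) simp
  ultimately show "\<exists>s\<in>Ord1. x \<in> Qstar #>\<^bsub>Nplus_group\<^esub> s" by blast
next
  assume "\<exists>s\<in>Ord1. x \<in> Qstar #>\<^bsub>Nplus_group\<^esub> s"
  then obtain s r where s: "s \<in> Ord1" "r \<noteq> 0" "x = qscale r s" by (auto simp: coset_Qstar)
  have "Psi2 x = Psi2 s" using s Psi2_scale Ord1_Nplus[OF s(1)] by simp
  also have "\<dots> = (0, (0, 0))"
    using nu_Ord1[OF pr(1) p2(1) s(1)] nu_Ord1[OF pr(2) p2(2) s(1)] nu_Ord1[OF pr(3) p2(3) s(1)] by (simp add: Psi2_def)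
  finally show "Psi2 x = \<one>\<^bsub>C2 \<times>\<times> C2 \<times>\<times> C2\<^esub>" by (simp add: C2_simps)
qed


lemma Psi1_gens: "Psi1 gb = ((0, 1), (0, 0))" "Psi1 gc = ((2, 1), (0, 0))" "Psi1 wA = ((1, 1), (0, 0))"
  "Psi1 a3 = ((0, 0), (1, 0))" "Psi1 a15 = ((0, 0), (1, 1))"
  by (simp_all add: Psi1_def code_def alpha_gb alpha_gc alpha_wA alpha_a3 alpha_a15 nu_vals)

lemma Psi1_m: "x \<in> Nplus \<Longrightarrow> y \<in> Nplus \<Longrightarrow> Psi1 (qmul x y) = Psi1 x \<otimes>\<^bsub>D8 \<times>\<times> C2 \<times>\<times> C2\<^esub> Psi1 y"
  by (rule Psi1_mul)

lemma int4: "(k::int) \<in> {0..<4} \<Longrightarrow> k = 0 \<or> k = 1 \<or> k = 2 \<or> k = 3" by auto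
lemma int2: "(k::int) \<in> {0..<2} \<Longrightarrow> k = 0 \<or> k = 1" by auto

lemma D8_wit: assumes "k \<in> {0..<4}" "s \<in> {0..<2}" shows "\<exists>x\<in>Nplus. Psi1 x = ((k, s), (0, 0))"
proof -
  note N = gb_N gc_N wA_N Nplus_mul qone_N
  have w00: "Psi1 qone = ((0, 0), (0, 0))" by (rule Psi1_one)
  have w01: "Psi1 gb = ((0, 1), (0, 0))" by (rule Psi1_gens)
  have w21: "Psi1 gc = ((2, 1), (0, 0))" by (rule Psi1_gens)
  have w11: "Psi1 wA = ((1, 1), (0, 0))" by (rule Psi1_gens)
  have w20: "Psi1 (qmul gb gc) = ((2, 0), (0, 0))" using Psi1_m[OF gb_N gc_N] Psi1_gens by (simp add: D8_def C2_simps)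
  have w10: "Psi1 (qmul wA gb) = ((1, 0), (0, 0))" using Psi1_m[OF wA_N gb_N] Psi1_gens by (simp add: D8_def C2_simps)
  have w30: "Psi1 (qmul gb wA) = ((3, 0), (0, 0))" using Psi1_m[OF gb_N wA_N] Psi1_gens by (simp add: D8_def C2_simps)
  have w31: "Psi1 (qmul (qmul gb wA) gb) = ((3, 1), (0, 0))"
    using Psi1_m[OF Nplus_mul[OF gb_N wA_N] gb_N] w30 Psi1_gens by (simp add: D8_def C2_simps)
  have e: "\<exists>x\<in>Nplus. Psi1 x = ((0, 0), (0, 0))" "\<exists>x\<in>Nplus. Psi1 x = ((0, 1), (0, 0))"
    "\<exists>x\<in>Nplus. Psi1 x = ((2, 1), (0, 0))" "\<exists>x\<in>Nplus. Psi1 x = ((1, 1), (0, 0))"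
    "\<exists>x\<in>Nplus. Psi1 x = ((2, 0), (0, 0))" "\<exists>x\<in>Nplus. Psi1 x = ((1, 0), (0, 0))"
    "\<exists>x\<in>Nplus. Psi1 x = ((3, 0), (0, 0))" "\<exists>x\<in>Nplus. Psi1 x = ((3, 1), (0, 0))"
    using w00 qone_N apply blast
    using w01 gb_N apply blast
    using w21 gc_N apply blast
    using w11 wA_N apply blast
    using w20 Nplus_mul[OF gb_N gc_N] apply blast
    using w10 Nplus_mul[OF wA_N gb_N] apply blast
    using w30 Nplus_mul[OF gb_N wA_N] apply blast
    using w31 Nplus_mul[OF Nplus_mul[OF gb_N wA_N] gb_N] apply blast
    done
  have "k = 0 \<or> k = 1 \<or> k = 2 \<or> k = 3" "s = 0 \<or> s = 1" using int4 int2 assms by auto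
  thus ?thesis using e by (elim disjE) simp_all
qed

lemma C_wit: assumes "u \<in> {0..<2}" "v \<in> {0..<2}" shows "\<exists>x\<in>Nplus. Psi1 x = ((0, 0), (u, v)) \<and> nu 2 x = 0"
proof -
  have w00: "Psi1 qone = ((0, 0), (0, 0))" by (rule Psi1_one)
  have w10: "Psi1 a3 = ((0, 0), (1, 0))" by (rule Psi1_gens)
  have w11: "Psi1 a15 = ((0, 0), (1, 1))" by (rule Psi1_gens)
  have w01: "Psi1 (qmul a3 a15) = ((0, 0), (0, 1))" using Psi1_m[OF a3_N a15_N] Psi1_gens by (simp add: D8_def C2_simps)
  have n: "nu 2 qone = 0" "nu 2 a3 = 0" "nu 2 a15 = 0" "nu 2 (qmul a3 a15) = 0"
    using nu_vals nu_mul[OF pr(1) a3_N a15_N] by simp_all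
  have e: "\<exists>x\<in>Nplus. Psi1 x = ((0, 0), (0, 0)) \<and> nu 2 x = 0" "\<exists>x\<in>Nplus. Psi1 x = ((0, 0), (1, 0)) \<and> nu 2 x = 0"
    "\<exists>x\<in>Nplus. Psi1 x = ((0, 0), (1, 1)) \<and> nu 2 x = 0" "\<exists>x\<in>Nplus. Psi1 x = ((0, 0), (0, 1)) \<and> nu 2 x = 0"
    using w00 n qone_N apply blast
    using w10 n a3_N apply blast
    using w11 n a15_N apply blast
    using w01 n Nplus_mul[OF a3_N a15_N] apply blast
    done
  have "u = 0 \<or> u = 1" "v = 0 \<or> v = 1" using int2 assms by auto
  thus ?thesis using e by (elim disjE) simp_all
qed

lemma Psi1_surj: "Psi1 ` carrier Nplus_group = carrier (D8 \<times>\<times> C2 \<times>\<times> C2)"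
proof
  show "Psi1 ` carrier Nplus_group \<subseteq> carrier (D8 \<times>\<times> C2 \<times>\<times> C2)" using Psi1_hom unfolding hom_def by blast
  show "carrier (D8 \<times>\<times> C2 \<times>\<times> C2) \<subseteq> Psi1 ` carrier Nplus_group"
  proof
    fix t assume "t \<in> carrier (D8 \<times>\<times> C2 \<times>\<times> C2)"
    then obtain k s u v where t: "t = ((k, s), (u, v))" "k \<in> {0..<4}" "s \<in> {0..<2}" "u \<in> {0..<2}" "v \<in> {0..<2}"
      by (auto simp: D8_def C2_simps)
    obtain xd where xd: "xd \<in> Nplus" "Psi1 xd = ((k, s), (0, 0))" using D8_wit[OF t(2,3)] by blast
    obtain xc where xc: "xc \<in> Nplus" "Psi1 xc = ((0, 0), (u, v))" using C_wit[OF t(4,5)] by blast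
    have "Psi1 (qmul xd xc) = t" using Psi1_m[OF xd(1) xc(1)] xd xc t by (simp add: D8_def C2_simps)
    thus "t \<in> Psi1 ` carrier Nplus_group" using Nplus_mul[OF xd(1) xc(1)] by (auto simp: Np_simps)
  qed
qed

lemma Qstar_Psi1: assumes "z \<in> Qstar" shows "Psi1 z = \<one>\<^bsub>D8 \<times>\<times> C2 \<times>\<times> C2\<^esub>"
proof -
  obtain r where r: "z = qof r" "r \<noteq> 0" using assms by (auto simp: Qstar_def)
  have "z = qscale r qone" using r by (simp add: qscale_qone)
  hence "Psi1 z = Psi1 qone" using Psi1_scale[OF r(2) qone_N] by simp
  thus ?thesis by (simp add: Psi1_one D8_simps C2_simps)
qed

lemma Psi1_ker': "x \<in> carrier Nplus_group \<Longrightarrow>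
   Psi1 x = \<one>\<^bsub>D8 \<times>\<times> C2 \<times>\<times> C2\<^esub> \<longleftrightarrow> (\<exists>s\<in>Ord1_2. x \<in> Qstar #>\<^bsub>Nplus_group\<^esub> s)"
  using Psi1_ker by (simp add: Np_simps)

lemma Ord1_2_sub: "Ord1_2 \<subseteq> carrier Nplus_group"
  using Ord1_Nplus by (auto simp: Ord1_2_def Np_simps)
lemma Ord1_sub: "Ord1 \<subseteq> carrier Nplus_group"
  using Ord1_Nplus by (auto simp: Np_simps)

theorem part1: "GammaPlus Mod Gamma1_2_in_plus \<cong> D8 \<times>\<times> C2 \<times>\<times> C2"
  unfolding GammaPlus_def Gamma1_2_in_plus_def
  using quot_iso[OF Nplus_group_group Qstar_normal DirProd_group[OF D8_group DirProd_group[OF C2_group C2_group]]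
      Psi1_hom Psi1_surj Qstar_Psi1 Ord1_2_sub Psi1_ker'] by simp


lemma Psi2_m: "x \<in> Nplus \<Longrightarrow> y \<in> Nplus \<Longrightarrow> Psi2 (qmul x y) = Psi2 x \<otimes>\<^bsub>C2 \<times>\<times> C2 \<times>\<times> C2\<^esub> Psi2 y"
  by (simp add: Psi2_def nu_mul pr C2_simps)

lemma Psi2_surj: "Psi2 ` carrier Nplus_group = carrier (C2 \<times>\<times> C2 \<times>\<times> C2)"
proof
  show "Psi2 ` carrier Nplus_group \<subseteq> carrier (C2 \<times>\<times> C2 \<times>\<times> C2)" using Psi2_hom unfolding hom_def by blast
  show "carrier (C2 \<times>\<times> C2 \<times>\<times> C2) \<subseteq> Psi2 ` carrier Nplus_group"
  proof
    fix t assume "t \<in> carrier (C2 \<times>\<times> C2 \<times>\<times> C2)"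
    then obtain w u v where t: "t = (w, (u, v))" "w \<in> {0..<2}" "u \<in> {0..<2}" "v \<in> {0..<2}"
      by (auto simp: C2_simps)
    obtain xc where xc: "xc \<in> Nplus" "Psi1 xc = ((0, 0), (u, v))" "nu 2 xc = 0" using C_wit[OF t(3,4)] by blast
    have p: "Psi2 xc = (0, (u, v))" using xc by (simp add: Psi1_def Psi2_def)
    have pw: "Psi2 wA = (1, (0, 0))" by (simp add: Psi2_def nu_vals)
    have "w = 0 \<or> w = 1" using int2 t(2) by auto
    thus "t \<in> Psi2 ` carrier Nplus_group"
    proof
      assume "w = 0" hence "t = Psi2 xc" using p t by simp
      thus ?thesis using xc(1) by (simp add: Np_simps rev_image_eqI)
    next
      assume "w = 1"
      hence "Psi2 (qmul wA xc) = t" using Psi2_m[OF wA_N xc(1)] p pw t by (simp add: C2_simps)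
      thus ?thesis using Nplus_mul[OF wA_N xc(1)] by (simp add: Np_simps rev_image_eqI)
    qed
  qed
qed

lemma Qstar_Psi2: assumes "z \<in> Qstar" shows "Psi2 z = \<one>\<^bsub>C2 \<times>\<times> C2 \<times>\<times> C2\<^esub>"
proof -
  obtain r where r: "z = qof r" "r \<noteq> 0" using assms by (auto simp: Qstar_def)
  have "z = qscale r qone" using r by (simp add: qscale_qone)
  hence "Psi2 z = Psi2 qone" using Psi2_scale[OF r(2) qone_N] by simp
  thus ?thesis by (simp add: Psi2_def nu_vals C2_simps)
qed

lemma Psi2_ker': "x \<in> carrier Nplus_group \<Longrightarrow>
   Psi2 x = \<one>\<^bsub>C2 \<times>\<times> C2 \<times>\<times> C2\<^esub> \<longleftrightarrow> (\<exists>s\<in>Ord1. x \<in> Qstar #>\<^bsub>Nplus_group\<^esub> s)"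
  using Psi2_ker by (simp add: Np_simps)

theorem part2: "GammaPlus Mod Gamma1_in_plus \<cong> C2 \<times>\<times> C2 \<times>\<times> C2"
  unfolding GammaPlus_def Gamma1_in_plus_def
  using quot_iso[OF Nplus_group_group Qstar_normal DirProd_group[OF C2_group DirProd_group[OF C2_group C2_group]]
      Psi2_hom Psi2_surj Qstar_Psi2 Ord1_sub Psi2_ker'] by simp

lemma O1_simps: "carrier Ord1_group = Ord1" "x \<otimes>\<^bsub>Ord1_group\<^esub> y = qmul x y" "\<one>\<^bsub>Ord1_group\<^esub> = qone"
  by (simp_all add: Ord1_group_def)

lemma Ord1_mul: "x \<in> Ord1 \<Longrightarrow> y \<in> Ord1 \<Longrightarrow> qmul x y \<in> Ord1"
  by (simp add: Ord1_def Ord_mul nrd_mul)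
lemma nrd_qone: "nrd qone = 1" by (simp add: qone_def nrd_qof)
lemma Ord1_one: "qone \<in> Ord1" by (simp add: Ord1_def nrd_qone)
lemma Ord1_nrd: "x \<in> Ord1 \<Longrightarrow> nrd x = 1" by (simp add: Ord1_def)
lemma Ord1_conj: "x \<in> Ord1 \<Longrightarrow> qconj x \<in> Ord1" by (simp add: Ord1_def Ord_conj nrd_conj)
lemma Ord1_m1: "qof (-1) \<in> Ord1"
  using Ord_qof_int[of "-1"] by (simp add: Ord1_def nrd_qof)

lemma Ord1_group_group: "group Ord1_group"
  apply (rule groupI)
  apply (auto simp: O1_simps Ord1_mul Ord1_one qmul_assoc)
  apply (rule_tac x="qconj x" in bexI)
   apply (auto simp: Ord1_conj qmul_conj' Ord1_nrd qone_def)
  done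

lemma Ord1_inv: "x \<in> Ord1 \<Longrightarrow> inv\<^bsub>Ord1_group\<^esub> x = qconj x"
  by (rule group.inv_equality[OF Ord1_group_group]) (auto simp: O1_simps Ord1_conj qmul_conj' Ord1_nrd qone_def)

lemma qinv_Ord1: "x \<in> Ord1 \<Longrightarrow> qinv x = qconj x" by (simp add: Ord1_def qinv_eq)

lemma pm_normal: "{qone, qof (-1)} \<lhd> Ord1_group"
proof -
  interpret group Ord1_group by (rule Ord1_group_group)
  have mm: "qmul (qof (-1)) (qof (-1)) = qone" by (simp add: qof_wq qone_wq wq_mul)
  have sub: "subgroup {qone, qof (-1)} Ord1_group"
  proof (rule subgroupI)
    show "{qone, qof (-1)} \<subseteq> carrier Ord1_group" using Ord1_one Ord1_m1 by (simp add: O1_simps)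
    show "{qone, qof (-1)} \<noteq> {}" by simp
    fix a b assume a: "a \<in> {qone, qof (-1)}" and b: "b \<in> {qone, qof (-1)}"
    have "qconj qone = qone" "qconj (qof (-1)) = qof (-1)" by (simp_all add: qone_wq qof_wq qconj_wq)
    thus "inv\<^bsub>Ord1_group\<^esub> a \<in> {qone, qof (-1)}" using a Ord1_inv Ord1_one Ord1_m1 by auto
    show "a \<otimes>\<^bsub>Ord1_group\<^esub> b \<in> {qone, qof (-1)}" using a b mm by (auto simp: O1_simps)
  qed
  show ?thesis
  proof (simp only: normal_inv_iff sub, intro conjI TrueI ballI)
    fix x h assume x: "x \<in> carrier Ord1_group" and h: "h \<in> {qone, qof (-1)}"
    have x1: "x \<in> Ord1" "nrd x \<noteq> 0" using x by (auto simp: O1_simps Ord1_def)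
    have "qmul (qmul x h) (qconj x) = h"
      using h cj_qof[OF x1(2), of 1] cj_qof[OF x1(2), of "-1"] qinv_Ord1[OF x1(1)] by (auto simp: qone_def)
    thus "x \<otimes>\<^bsub>Ord1_group\<^esub> h \<otimes>\<^bsub>Ord1_group\<^esub> inv\<^bsub>Ord1_group\<^esub> x \<in> {qone, qof (-1)}"
      using h Ord1_inv[OF x1(1)] by (simp add: O1_simps)
  qed
qed

definition b2i :: "bool \<Rightarrow> int" where "b2i b = (if b then 1 else 0)"
definition Psi3 :: "quat \<Rightarrow> int \<times> int" where
  "Psi3 g = (b2i (fst (snd (bits g))), b2i (fst (snd (snd (bits g)))))"

lemma bits_Ord1: assumes "g \<in> Ord1" shows "\<exists>b c. bits g = (True, b, c, True)"
proof -
  obtain n0 n1 n2 n3 where s: "g = wi n0 n1 n2 n3" "nf n0 n1 n2 n3 = 1" by (rule Ord1_wi[OF assms])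
  have "odd (nf n0 n1 n2 n3)" using s by simp
  hence o: "odd n0 \<and> odd (n0 + n3)" by (rule odd_nf)
  hence "even n3" by presburger
  thus ?thesis using s(1) o by simp
qed

lemma Psi3_mul: assumes "x \<in> Ord1" "y \<in> Ord1" shows "Psi3 (qmul x y) = Psi3 x \<otimes>\<^bsub>C2 \<times>\<times> C2\<^esub> Psi3 y"
proof -
  obtain b c where bx: "bits x = (True, b, c, True)" using bits_Ord1[OF assms(1)] by blast
  obtain b2 c2 where bY: "bits y = (True, b2, c2, True)" using bits_Ord1[OF assms(2)] by blast
  have "bits (qmul x y) = amul (bits x) (bits y)" using assms by (simp add: bits_mul Ord1_def)
  hence "bits (qmul x y) = (True, b \<noteq> b2, c \<noteq> c2, True)" using bx bY by (auto simp: amul_def)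
  thus ?thesis using bx bY by (simp add: Psi3_def C2_simps b2i_def)
qed

lemma Psi3_hom: "Psi3 \<in> hom Ord1_group (C2 \<times>\<times> C2)"
  apply (rule homI)
   apply (simp add: Psi3_def C2_simps b2i_def)
  apply (simp add: O1_simps Psi3_mul)
  done

lemma Psi3_surj: "Psi3 ` carrier Ord1_group = carrier (C2 \<times>\<times> C2)"
proof
  show "Psi3 ` carrier Ord1_group \<subseteq> carrier (C2 \<times>\<times> C2)" using Psi3_hom unfolding hom_def by blast
  have w: "Psi3 qone = (0, 0)" "Psi3 gb = (1, 0)" "Psi3 gc = (0, 1)" "Psi3 (qmul gb gc) = (1, 1)"
    using Psi3_mul[OF gb_O1 gc_O1]
    by (simp_all add: Psi3_def qone_wi gb_def gc_def b2i_def C2_simps)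
  show "carrier (C2 \<times>\<times> C2) \<subseteq> Psi3 ` carrier Ord1_group"
  proof
    fix t assume "t \<in> carrier (C2 \<times>\<times> C2)"
    then obtain u v where t0: "t = (u, v)" "u \<in> {0..<2}" "v \<in> {0..<2}" by (auto simp: C2_simps)
    have t: "t = (u, v)" "u = 0 \<or> u = 1" "v = 0 \<or> v = 1" using t0 int2 by auto
    have m: "qone \<in> Ord1" "gb \<in> Ord1" "gc \<in> Ord1" "qmul gb gc \<in> Ord1"
      using Ord1_one gb_O1 gc_O1 Ord1_mul[OF gb_O1 gc_O1] by auto
    have e: "(0, 0) \<in> Psi3 ` Ord1" "(1, 0) \<in> Psi3 ` Ord1" "(0, 1) \<in> Psi3 ` Ord1" "(1, 1) \<in> Psi3 ` Ord1"
      using w m by (simp_all add: rev_image_eqI)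
    show "t \<in> Psi3 ` carrier Ord1_group" using t e by (auto simp: O1_simps)
  qed
qed

lemma Psi3_pm: "z \<in> {qone, qof (-1)} \<Longrightarrow> Psi3 z = \<one>\<^bsub>C2 \<times>\<times> C2\<^esub>"
  using qof_wi[of "-1"] by (auto simp: Psi3_def qone_wi b2i_def C2_simps)

lemma Ord1_2_sub1: "Ord1_2 \<subseteq> carrier Ord1_group" by (auto simp: Ord1_2_def O1_simps)

lemma Psi3_ker: assumes x: "x \<in> carrier Ord1_group"
  shows "Psi3 x = \<one>\<^bsub>C2 \<times>\<times> C2\<^esub> \<longleftrightarrow> (\<exists>s\<in>Ord1_2. x \<in> {qone, qof (-1)} #>\<^bsub>Ord1_group\<^esub> s)"
proof -
  have x1: "x \<in> Ord1" using x by (simp add: O1_simps)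
  obtain b c where bx: "bits x = (True, b, c, True)" using bits_Ord1[OF x1] by blast
  have k: "Psi3 x = \<one>\<^bsub>C2 \<times>\<times> C2\<^esub> \<longleftrightarrow> x \<in> Ord1_2"
    using Ord1_2_iff[OF x1] bx by (auto simp: Psi3_def b2i_def C2_simps bone_def)
  have cos: "y \<in> {qone, qof (-1)} #>\<^bsub>Ord1_group\<^esub> s \<longleftrightarrow> y = s \<or> y = qscale (-1) s" for y s
    by (auto simp: r_coset_def O1_simps qmul_qof)
  show ?thesis
  proof
    assume "Psi3 x = \<one>\<^bsub>C2 \<times>\<times> C2\<^esub>"
    hence "x \<in> Ord1_2" using k by simp
    thus "\<exists>s\<in>Ord1_2. x \<in> {qone, qof (-1)} #>\<^bsub>Ord1_group\<^esub> s" using cos by blast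
  next
    assume "\<exists>s\<in>Ord1_2. x \<in> {qone, qof (-1)} #>\<^bsub>Ord1_group\<^esub> s"
    then obtain s where s: "s \<in> Ord1_2" "x = s \<or> x = qscale (-1) s" using cos by blast
    have s1: "s \<in> Ord1" "s \<in> Ord" using s(1) by (auto simp: Ord1_2_def Ord1_def)
    have "bits (qscale (-1) s) = bits s" using bits_scale[OF s1(2), of "-1"] by simp
    hence "bits x = bits s" using s(2) by auto
    hence "bits x = bone" using Ord1_2_iff[OF s1(1)] s(1) by simp
    thus "Psi3 x = \<one>\<^bsub>C2 \<times>\<times> C2\<^esub>" using Ord1_2_iff[OF x1] k by simp
  qed
qed

theorem part3: "Gamma1 Mod Gamma1_2 \<cong> C2 \<times>\<times> C2"
  unfolding Gamma1_def Gamma1_2_def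
  using quot_iso[OF Ord1_group_group pm_normal DirProd_group[OF C2_group C2_group]
      Psi3_hom Psi3_surj Psi3_pm Ord1_2_sub1 Psi3_ker] by simp

theorem lemma5p10:
  shows "GammaPlus Mod Gamma1_2_in_plus \<cong> D8 \<times>\<times> C2 \<times>\<times> C2 \<and>
         GammaPlus Mod Gamma1_in_plus \<cong> C2 \<times>\<times> C2 \<times>\<times> C2 \<and>
         Gamma1 Mod Gamma1_2 \<cong> C2 \<times>\<times> C2"
  using part1 part2 part3 by blast


end
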